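(* Let $d_1\in\mathbb{Z}$, $f\in\mathcal{E}_{d_1}$, and let $\zeta\in\mathbb{S}^1$ be a Lebesgue point of $\dot f$ with $(f\wedge\dot f)(\zeta)\ne0$. Then for every $d_2\in\mathbb{Z}$ such that $(d_2-d_1)\cdot(f\wedge\dot f)(\zeta)<0$ there exists $g\in\mathcal{E}_{d_2}$ with $\int_{\mathbb{S}^1}|\dot f-\dot g|<2\pi|d_1-d_2|$.
   Context: $W^{1,1}(\mathbb{S}^1;\mathbb{S}^1)=\{f\in W^{1,1}(\mathbb{S}^1;\mathbb{R}^2):|f|=1\}$; $\dot f$ is the arclength derivative (an $L^1$ function on $\mathbb{S}^1$); $\mathcal{E}_d=\{f\in W^{1,1}(\mathbb{S}^1;\mathbb{S}^1):\deg f=d\}$; for $f=(f_1,f_2)$, $f\wedge\dot f=f_1\dot f_2-f_2\dot f_1$. *)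

theory Defs
  imports "HOL-Complex_Analysis.Complex_Analysis"
begin

(* S^1 is parametrised by the angle theta (arclength), maps S^1 -> C are 2pi-periodic
   functions real => complex.  W11_S1 f g : f is in W^{1,1}(S^1;S^1) and g is (a
   representative of) its arclength derivative, i.e. g is locally integrable and
   f is the indefinite integral of g. *)
definition W11_S1 :: "(real \<Rightarrow> complex) \<Rightarrow> (real \<Rightarrow> complex) \<Rightarrow> bool" where
  "W11_S1 f g \<longleftrightarrow>
     (\<forall>x. f (x + 2*pi) = f x) \<and> (\<forall>x. cmod (f x) = 1) \<and>
     (\<forall>a b. set_integrable lborel {a..b} g) \<and>
     (\<forall>a b. a \<le> b \<longrightarrow> f b - f a = (LINT s:{a..b}|lborel. g s))"

definition S1_degree :: "(real \<Rightarrow> complex) \<Rightarrow> complex" where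
  "S1_degree f = winding_number (\<lambda>t. f (2*pi*t)) 0"

definition wedge :: "complex \<Rightarrow> complex \<Rightarrow> real" where
  "wedge a b = Re a * Im b - Im a * Re b"

definition lebesgue_point :: "(real \<Rightarrow> complex) \<Rightarrow> real \<Rightarrow> bool" where
  "lebesgue_point g x \<longleftrightarrow>
     ((\<lambda>r. (LINT s:{x-r..x+r}|lborel. cmod (g s - g x)) / (2*r)) \<longlongrightarrow> 0) (at_right 0)"

end

theory Submission
  imports Defs
begin




lemma wind_exp_path:
  assumes "continuous_on {0..1} L"
  shows "winding_number (\<lambda>t. exp (L t)) 0 = (L 1 - L 0) / (2 * of_real pi * \<i>)"
proof -
  have "path L" using assms by (simp add: path_def)
  from winding_number_compose_exp[OF this] show ?thesis
    by (simp add: o_def pathstart_def pathfinish_def)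
qed

lemma degree_mult:
  fixes f :: "real \<Rightarrow> complex" and \<Lambda> :: "real \<Rightarrow> real" and d1 k :: int
  assumes fc: "continuous_on UNIV f" and fnz: "\<And>x. f x \<noteq> 0"
    and deg: "S1_degree f = of_int d1"
    and Lc: "continuous_on UNIV \<Lambda>" and Lp: "\<Lambda> (2*pi) = \<Lambda> 0 + 1"
  shows "S1_degree (\<lambda>x. f x * exp (- (2 * of_real pi * \<i> * of_int k) * of_real (\<Lambda> x))) = of_int (d1 - k)"
proof -
  have c1: "continuous_on {0..1} (\<lambda>t. f (2*pi*t))"
    by (intro continuous_on_compose2[OF fc] continuous_intros) auto
  obtain L where Lc1: "continuous_on {0..1} L" and Le: "\<And>t. t \<in> {0..1} \<Longrightarrow> f (2*pi*t) = exp (L t)"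
    using continuous_logarithm_on_contractible[OF c1 convex_imp_contractible[OF convex_real_interval(5)]] fnz
    by (metis atLeastAtMost_def)
  have "S1_degree f = winding_number (\<lambda>t. exp (L t)) 0"
    unfolding S1_degree_def by (rule winding_number_cong) (use Le in auto)
  also have "\<dots> = (L 1 - L 0) / (2 * of_real pi * \<i>)" by (rule wind_exp_path[OF Lc1])
  finally have d: "(L 1 - L 0) / (2 * of_real pi * \<i>) = of_int d1" using deg by simp
  define q where "q t = L t - (2 * of_real pi * \<i> * of_int k) * of_real (\<Lambda> (2*pi*t))" for t
  have qc: "continuous_on {0..1} q" unfolding q_def
    by (intro continuous_intros Lc1 continuous_on_of_real continuous_on_compose2[OF Lc]) auto
  have "S1_degree (\<lambda>x. f x * exp (- (2 * of_real pi * \<i> * of_int k) * of_real (\<Lambda> x)))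
      = winding_number (\<lambda>t. exp (q t)) 0"
    unfolding S1_degree_def by (rule winding_number_cong) (use Le in \<open>auto simp: q_def exp_diff exp_minus field_simps\<close>)
  also have "\<dots> = (q 1 - q 0) / (2 * of_real pi * \<i>)" by (rule wind_exp_path[OF qc])
  also have "\<dots> = (L 1 - L 0) / (2 * of_real pi * \<i>) - of_int k * (of_real (\<Lambda> (2*pi)) - of_real (\<Lambda> 0))"
    unfolding q_def by (simp add: field_simps)
  also have "\<dots> = of_int (d1 - k)" using d Lp by simp
  finally show ?thesis .
qed




lemma prod_rule:
  fixes f g u w :: "real \<Rightarrow> complex" and a b :: real
  assumes ab: "a \<le> b"
    and gi: "set_integrable lborel {a..b} g" and wi: "set_integrable lborel {a..b} w"
    and fF: "\<And>x. a \<le> x \<Longrightarrow> x \<le> b \<Longrightarrow> f x - f a = (LINT s:{a..x}|lborel. g s)"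
    and uF: "\<And>x. a \<le> x \<Longrightarrow> x \<le> b \<Longrightarrow> u x - u a = (LINT s:{a..x}|lborel. w s)"
    and fc: "continuous_on UNIV f" and uc: "continuous_on UNIV u"
  shows "set_integrable lborel {a..b} (\<lambda>s. g s * u s + f s * w s)"
    and "f b * u b - f a * u a = (LINT s:{a..b}|lborel. g s * u s + f s * w s)"
proof -
  define I where "I = {a..b}"
  define gI where "gI s = indicator I s *\<^sub>R g s" for s
  define wI where "wI s = indicator I s *\<^sub>R w s" for s
  have gIi: "integrable lborel gI" using gi unfolding gI_def I_def set_integrable_def .
  have wIi: "integrable lborel wI" using wi unfolding wI_def I_def set_integrable_def .
  have gIm[measurable]: "gI \<in> borel_measurable borel" using gIi by (simp add: borel_measurable_integrable)
  have wIm[measurable]: "wI \<in> borel_measurable borel" using wIi by (simp add: borel_measurable_integrable)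
  have fm[measurable]: "f \<in> borel_measurable borel" using fc by (rule borel_measurable_continuous_onI)
  have um[measurable]: "u \<in> borel_measurable borel" using uc by (rule borel_measurable_continuous_onI)
  have cI: "compact I" unfolding I_def by simp
  obtain Mf where Mf: "\<And>x. x \<in> I \<Longrightarrow> norm (f x) \<le> Mf"
    using compact_imp_bounded[OF compact_continuous_image[OF continuous_on_subset[OF fc] cI]]
    by (auto simp: bounded_iff)
  obtain Mu where Mu: "\<And>x. x \<in> I \<Longrightarrow> norm (u x) \<le> Mu"
    using compact_imp_bounded[OF compact_continuous_image[OF continuous_on_subset[OF uc] cI]]
    by (auto simp: bounded_iff)
  have gu_b: "norm (gI x * u x) \<le> norm (Mu * gI x)" for x
  proof (cases "x \<in> I")
    case True
    then have "norm (u x) \<le> \<bar>Mu\<bar>" using Mu[of x] by linarith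
    then show ?thesis using mult_left_mono[of "norm (u x)" "\<bar>Mu\<bar>" "norm (gI x)"]
      by (simp add: norm_mult mult.commute)
  qed (simp add: gI_def)
  have gu_i: "integrable lborel (\<lambda>s. gI s * u s)"
    by (rule Bochner_Integration.integrable_bound[OF integrable_mult_right[OF gIi, of Mu]]) (use gu_b in auto)
  have fw_b: "norm (f x * wI x) \<le> norm (Mf * wI x)" for x
  proof (cases "x \<in> I")
    case True
    then have "norm (f x) \<le> \<bar>Mf\<bar>" using Mf[of x] by linarith
    then show ?thesis by (simp add: norm_mult mult_right_mono)
  qed (simp add: wI_def)
  have fw_i: "integrable lborel (\<lambda>s. f s * wI s)"
    by (rule Bochner_Integration.integrable_bound[OF integrable_mult_right[OF wIi, of Mf]]) (use fw_b in auto)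
  have eqgen: "indicator I s *\<^sub>R (g s * u s + f s * w s) = gI s * u s + f s * wI s" for s
    by (auto simp: gI_def wI_def indicator_def)
  show "set_integrable lborel {a..b} (\<lambda>s. g s * u s + f s * w s)"
    unfolding set_integrable_def I_def[symmetric] eqgen using gu_i fw_i by simp
  have split: "(LINT s:{a..b}|lborel. g s * u s + f s * w s) = integral\<^sup>L lborel (\<lambda>s. gI s * u s) + integral\<^sup>L lborel (\<lambda>s. f s * wI s)"
    unfolding set_lebesgue_integral_def I_def[symmetric] eqgen using gu_i fw_i by simp
  define K where "K p = gI (fst p) * wI (snd p)" for p
  have Km[measurable]: "K \<in> borel_measurable (lborel \<Otimes>\<^sub>M lborel)" unfolding K_def by measurable
  have Ki: "integrable (lborel \<Otimes>\<^sub>M lborel) K"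
  proof (rule lborel_pair.Fubini_integrable[OF Km])
    have "(\<lambda>x. \<integral>y. norm (K (x, y)) \<partial>lborel) = (\<lambda>x. norm (gI x) * (\<integral>y. norm (wI y) \<partial>lborel))"
      by (simp add: K_def norm_mult)
    then show "integrable lborel (\<lambda>x. \<integral>y. norm (K (x, y)) \<partial>lborel)"
      using gIi by simp
    show "AE x in lborel. integrable lborel (\<lambda>y. K (x, y))" using wIi by (simp add: K_def)
  qed
  define K1 where "K1 p = K p * (if snd p \<le> fst p then 1 else 0)" for p
  define K2 where "K2 p = K p * (if fst p \<le> snd p then 1 else 0)" for p
  have K1m[measurable]: "K1 \<in> borel_measurable (lborel \<Otimes>\<^sub>M lborel)"
    unfolding K1_def K_def by measurable
  have K2m[measurable]: "K2 \<in> borel_measurable (lborel \<Otimes>\<^sub>M lborel)"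
    unfolding K2_def K_def by measurable
  have K1i: "integrable (lborel \<Otimes>\<^sub>M lborel) K1"
    by (rule Bochner_Integration.integrable_bound[OF Ki]) (auto simp: K1_def norm_mult)
  have K2i: "integrable (lborel \<Otimes>\<^sub>M lborel) K2"
    by (rule Bochner_Integration.integrable_bound[OF Ki]) (auto simp: K2_def norm_mult)
  have K1i': "integrable (lborel \<Otimes>\<^sub>M lborel) (case_prod (\<lambda>x y. K1 (x,y)))" using K1i by simp
  have K2i': "integrable (lborel \<Otimes>\<^sub>M lborel) (case_prod (\<lambda>x y. K2 (x,y)))" using K2i by simp
  have in1: "integrable lborel (\<lambda>s. \<integral>t. K1 (s,t) \<partial>lborel)" using lborel_pair.integrable_fst'[OF K1i] .
  have in2: "integrable lborel (\<lambda>s. \<integral>t. K2 (s,t) \<partial>lborel)" using lborel_pair.integrable_fst'[OF K2i] .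
  have A: "gI s * u s = gI s * u a + (\<integral>t. K1 (s,t) \<partial>lborel)" for s
  proof (cases "s \<in> I")
    case True
    then have s: "a \<le> s" "s \<le> b" by (auto simp: I_def)
    have "u s = u a + (LINT t:{a..s}|lborel. w t)" using uF[OF s] by (simp add: algebra_simps)
    also have "(LINT t:{a..s}|lborel. w t) = (\<integral>t. wI t * (if t \<le> s then 1 else 0) \<partial>lborel)"
      unfolding set_lebesgue_integral_def using s
      by (intro Bochner_Integration.integral_cong) (auto simp: wI_def I_def indicator_def)
    finally show ?thesis by (simp add: K1_def K_def distrib_left mult.assoc)
  qed (simp add: gI_def K1_def K_def)
  have B: "f t * wI t = f a * wI t + (\<integral>s. K2 (s,t) \<partial>lborel)" for t
  proof (cases "t \<in> I")
    case True
    then have t: "a \<le> t" "t \<le> b" by (auto simp: I_def)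
    have "f t = f a + (LINT s:{a..t}|lborel. g s)" using fF[OF t] by (simp add: algebra_simps)
    also have "(LINT s:{a..t}|lborel. g s) = (\<integral>s. gI s * (if s \<le> t then 1 else 0) \<partial>lborel)"
      unfolding set_lebesgue_integral_def using t
      by (intro Bochner_Integration.integral_cong) (auto simp: gI_def I_def indicator_def)
    moreover have "(\<integral>s. K2 (s,t) \<partial>lborel) = wI t * (\<integral>s. gI s * (if s \<le> t then 1 else 0) \<partial>lborel)"
      by (subst integral_mult_right_zero[symmetric]) (simp add: K2_def K_def mult_ac)
    ultimately show ?thesis by (simp add: distrib_left mult.commute)
  qed (simp add: wI_def K2_def K_def)
  have intA: "integral\<^sup>L lborel (\<lambda>s. gI s * u s) = u a * integral\<^sup>L lborel gI + (\<integral>s. \<integral>t. K1 (s,t) \<partial>lborel \<partial>lborel)"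
    unfolding A using gIi in1 by (simp add: mult.commute)
  have intB0: "integral\<^sup>L lborel (\<lambda>t. f t * wI t) = f a * integral\<^sup>L lborel wI + (\<integral>t. \<integral>s. K2 (s,t) \<partial>lborel \<partial>lborel)"
  proof -
    have in2': "integrable lborel (\<lambda>t. \<integral>s. K2 (s,t) \<partial>lborel)"
      using lborel_pair.integrable_snd[OF K2i'] by simp
    show ?thesis unfolding B using wIi in2' by simp
  qed
  have fub: "(\<integral>t. \<integral>s. K2 (s,t) \<partial>lborel \<partial>lborel) = (\<integral>s. \<integral>t. K2 (s,t) \<partial>lborel \<partial>lborel)"
    using lborel_pair.Fubini_integral[OF K2i'] by simp
  have C: "(\<integral>t. K1 (s,t) \<partial>lborel) + (\<integral>t. K2 (s,t) \<partial>lborel) = gI s * integral\<^sup>L lborel wI" for s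
  proof -
    have i1: "integrable lborel (\<lambda>t. K1 (s,t))"
      by (rule Bochner_Integration.integrable_bound[OF integrable_mult_right[OF wIi, of "gI s"]])
         (auto simp: K1_def K_def norm_mult)
    have i2: "integrable lborel (\<lambda>t. K2 (s,t))"
      by (rule Bochner_Integration.integrable_bound[OF integrable_mult_right[OF wIi, of "gI s"]])
         (auto simp: K2_def K_def norm_mult)
    have "(\<integral>t. K1 (s,t) \<partial>lborel) + (\<integral>t. K2 (s,t) \<partial>lborel) = (\<integral>t. K1 (s,t) + K2 (s,t) \<partial>lborel)"
      using i1 i2 by simp
    also have "\<dots> = (\<integral>t. gI s * wI t \<partial>lborel)"
    proof (rule integral_cong_AE)
      show "AE t in lborel. K1 (s, t) + K2 (s, t) = gI s * wI t"
        using AE_lborel_singleton[of s] by eventually_elim (auto simp: K1_def K2_def K_def)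
    qed (use i1 i2 in auto)
    finally show ?thesis by simp
  qed
  have sumK: "(\<integral>s. \<integral>t. K1 (s,t) \<partial>lborel \<partial>lborel) + (\<integral>s. \<integral>t. K2 (s,t) \<partial>lborel \<partial>lborel)
      = integral\<^sup>L lborel gI * integral\<^sup>L lborel wI"
  proof -
    have "(\<integral>s. \<integral>t. K1 (s,t) \<partial>lborel \<partial>lborel) + (\<integral>s. \<integral>t. K2 (s,t) \<partial>lborel \<partial>lborel)
        = (\<integral>s. (\<integral>t. K1 (s,t) \<partial>lborel) + (\<integral>t. K2 (s,t) \<partial>lborel) \<partial>lborel)"
      using in1 in2 by simp
    also have "\<dots> = (\<integral>s. gI s * integral\<^sup>L lborel wI \<partial>lborel)" unfolding C ..
    finally show ?thesis by simp
  qed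
  have Gab: "integral\<^sup>L lborel gI = f b - f a" using fF[OF ab order.refl]
    by (simp add: gI_def[abs_def] I_def set_lebesgue_integral_def)
  have Wab: "integral\<^sup>L lborel wI = u b - u a" using uF[OF ab order.refl]
    by (simp add: wI_def[abs_def] I_def set_lebesgue_integral_def)
  show "f b * u b - f a * u a = (LINT s:{a..b}|lborel. g s * u s + f s * w s)"
    unfolding split intA intB0 fub
    using sumK unfolding Gab Wab by (simp add: algebra_simps)
qed




definition rho :: "real \<Rightarrow> real \<Rightarrow> real" where
  "rho \<eta> s = of_int \<lfloor>s\<rfloor> + min 1 ((s - of_int \<lfloor>s\<rfloor>) / \<eta>)"

lemma rho_local:
  fixes n :: int and \<eta> s :: real
  assumes "0 < \<eta>" "\<eta> < 1" "n - 1 + \<eta> < s" "s < n + 1"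
  shows "rho \<eta> s = n + max 0 (min 1 ((s - n) / \<eta>))"
proof (cases "s \<ge> n")
  case True
  then have "\<lfloor>s\<rfloor> = n" using assms by (simp add: floor_eq_iff)
  moreover have "(s - n) / \<eta> \<ge> 0" using True assms by simp
  ultimately show ?thesis unfolding rho_def by simp
next
  case False
  then have "\<lfloor>s\<rfloor> = n - 1" using assms by (simp add: floor_eq_iff)
  moreover have "(s - (n - 1)) / \<eta> \<ge> 1" using assms by (simp add: field_simps)
  moreover have "(s - n) / \<eta> \<le> 0" using False assms by (simp add: divide_nonpos_pos)
  ultimately show ?thesis unfolding rho_def by simp
qed

lemma rho_cont:
  fixes \<eta> :: real
  assumes "0 < \<eta>" "\<eta> < 1"
  shows "continuous_on UNIV (rho \<eta>)"
proof (rule continuous_at_imp_continuous_on, clarify)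
  fix s0 :: real
  define n where "n = \<lfloor>s0\<rfloor>"
  have s0: "n - 1 + \<eta> < s0" "s0 < n + 1" using assms unfolding n_def by linarith+
  let ?S = "{n - 1 + \<eta> <..< n + 1}"
  have "continuous_on ?S (\<lambda>s. n + max 0 (min 1 ((s - n) / \<eta>)))"
    by (intro continuous_intros) (use assms in auto)
  then have "continuous_on ?S (rho \<eta>)"
  proof (rule continuous_on_cong[THEN iffD1, rotated 2])
    fix x assume "x \<in> ?S"
    then show "n + max 0 (min 1 ((x - n) / \<eta>)) = rho \<eta> x"
      using rho_local[of \<eta> n x] assms by auto
  qed auto
  then show "isCont (rho \<eta>) s0"
    using s0 by (simp add: continuous_on_eq_continuous_at)
qed

lemma rho_shift: "rho \<eta> (s + 1) = rho \<eta> s + 1"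
  unfolding rho_def by simp

lemma rho_deriv1:
  fixes n :: int and \<eta> s :: real
  assumes "0 < \<eta>" "\<eta> < 1" "n < s" "s < n + \<eta>"
  shows "(rho \<eta> has_real_derivative 1 / \<eta>) (at s)"
proof (rule has_field_derivative_transform_within_open)
  show "((\<lambda>s. n + (s - n) / \<eta>) has_real_derivative 1 / \<eta>) (at s)"
    using assms by (auto intro!: derivative_eq_intros)
  show "open {real_of_int n<..<n + \<eta>}" by simp
  show "s \<in> {real_of_int n<..<n + \<eta>}" using assms by simp
  fix x assume x: "x \<in> {real_of_int n<..<n + \<eta>}"
  then have "(x - n) / \<eta> \<ge> 0" "(x - n) / \<eta> \<le> 1" using assms by (auto simp: field_simps)
  then show "n + (x - n) / \<eta> = rho \<eta> x"
    using rho_local[of \<eta> n x] assms x by auto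
qed

lemma rho_deriv0:
  fixes n :: int and \<eta> s :: real
  assumes "0 < \<eta>" "\<eta> < 1" "n + \<eta> < s" "s < n + 1"
  shows "(rho \<eta> has_real_derivative 0) (at s)"
proof (rule has_field_derivative_transform_within_open)
  show "((\<lambda>s. n + 1) has_real_derivative 0) (at s)"
    by (auto intro!: derivative_eq_intros)
  show "open {n + \<eta> <..< real_of_int n + 1}" by simp
  show "s \<in> {n + \<eta> <..< real_of_int n + 1}" using assms by simp
  fix x assume x: "x \<in> {n + \<eta> <..< real_of_int n + 1}"
  then have "(x - n) / \<eta> \<ge> 1" using assms by (auto simp: field_simps)
  then show "n + 1 = rho \<eta> x"
    using rho_local[of \<eta> n x] assms x by auto
qed

lemma rho_win:
  fixes \<eta> s :: real
  assumes "0 < \<eta>" "0 \<le> s" "s \<le> \<eta>" "\<eta> < 1" shows "rho \<eta> s = s / \<eta>"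
proof -
  have "\<lfloor>s\<rfloor> = 0" using assms by (simp add: floor_eq_iff)
  moreover have "s / \<eta> \<le> 1" using assms by simp
  ultimately show ?thesis unfolding rho_def by simp
qed

definition Vf :: "real \<Rightarrow> real \<Rightarrow> int \<Rightarrow> real \<Rightarrow> complex" where
  "Vf p \<epsilon> k x = exp (- (2 * of_real pi * \<i> * of_int k) * of_real (rho (\<epsilon>/(2*pi)) ((x - p)/(2*pi))))"

definition fr :: "real \<Rightarrow> real" where "fr s = s - of_int \<lfloor>s\<rfloor>"

definition wfn :: "real \<Rightarrow> real \<Rightarrow> int \<Rightarrow> real \<Rightarrow> complex" where
  "wfn p \<epsilon> k x = (if 0 < fr ((x-p)/(2*pi)) \<and> fr ((x-p)/(2*pi)) < \<epsilon>/(2*pi)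
      then - (2 * of_real pi * \<i> * of_int k / of_real \<epsilon>) * Vf p \<epsilon> k x else 0)"

context
  fixes p \<epsilon> :: real and k :: int
  assumes eps: "0 < \<epsilon>" "\<epsilon> < 2*pi"
begin

lemma eta: "0 < \<epsilon>/(2*pi)" "\<epsilon>/(2*pi) < 1"
  using eps pi_gt_zero by (auto simp: field_simps)

lemma Lam_cont: "continuous_on UNIV (\<lambda>x. rho (\<epsilon>/(2*pi)) ((x - p)/(2*pi)))"
  by (intro continuous_on_compose2[OF rho_cont[OF eta]] continuous_intros) auto

lemma Lam_per: "rho (\<epsilon>/(2*pi)) ((2*pi - p)/(2*pi)) = rho (\<epsilon>/(2*pi)) ((0 - p)/(2*pi)) + 1"
proof -
  have e: "(2*pi - p)/(2*pi) = (0 - p)/(2*pi) + 1" by (simp add: field_simps)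
  show ?thesis by (simp only: e rho_shift)
qed

lemma V_cont: "continuous_on UNIV (Vf p \<epsilon> k)"
  unfolding Vf_def[abs_def]
  by (intro continuous_intros continuous_on_of_real Lam_cont[THEN continuous_on_compose2]) auto

lemma V_per: "Vf p \<epsilon> k (x + 2*pi) = Vf p \<epsilon> k x"
proof -
  have e: "(x + 2*pi - p)/(2*pi) = (x - p)/(2*pi) + 1" by (simp add: field_simps)
  define C where "C = - (2 * of_real pi * \<i> * of_int k)"
  have C1: "exp C = 1"
  proof -
    have "C = - (\<i> * (of_int k * (of_real pi * 2)))" by (simp add: C_def mult_ac)
    then show ?thesis by (simp add: exp_minus)
  qed
  have "Vf p \<epsilon> k (x + 2*pi) = exp (C * of_real (rho (\<epsilon>/(2*pi)) ((x - p)/(2*pi)) + 1))"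
    unfolding Vf_def C_def[symmetric] by (simp only: e rho_shift)
  also have "\<dots> = exp (C * of_real (rho (\<epsilon>/(2*pi)) ((x - p)/(2*pi)))) * exp C"
    by (simp add: distrib_left exp_add)
  finally show ?thesis using C1 by (simp add: Vf_def C_def)
qed

lemma V_norm: "norm (Vf p \<epsilon> k x) = 1"
  unfolding Vf_def by (simp add: norm_exp_eq_Re)

lemma w_bound: "norm (wfn p \<epsilon> k x) \<le> 2*pi*\<bar>k\<bar>/\<epsilon>"
  using eps by (auto simp: wfn_def norm_mult V_norm norm_divide)

lemma V_meas[measurable]: "Vf p \<epsilon> k \<in> borel_measurable borel"
  using V_cont by (rule borel_measurable_continuous_onI)

lemma w_meas[measurable]: "wfn p \<epsilon> k \<in> borel_measurable borel"
  unfolding wfn_def[abs_def] fr_def by measurable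

lemma w_int: "set_integrable lborel {a..b} (wfn p \<epsilon> k)"
  unfolding set_integrable_def
  by (rule integrableI_bounded_set_indicator[where B="2*pi*\<bar>k\<bar>/\<epsilon>"]) (use w_bound in \<open>auto simp: emeasure_lborel_Icc_eq\<close>)

lemma V_deriv:
  assumes "fr ((x-p)/(2*pi)) \<noteq> 0" "fr ((x-p)/(2*pi)) \<noteq> \<epsilon>/(2*pi)"
  shows "(Vf p \<epsilon> k has_vector_derivative wfn p \<epsilon> k x) (at x)"
proof -
  define \<eta> where "\<eta> = \<epsilon>/(2*pi)"
  define s where "s = (x-p)/(2*pi)"
  define n where "n = \<lfloor>s\<rfloor>"
  have et: "0 < \<eta>" "\<eta> < 1" using eta by (auto simp: \<eta>_def)
  have sn: "n < s" "s < n + 1" using assms(1) unfolding n_def s_def fr_def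
    by (auto simp: floor_eq_iff) (metis floor_less_iff less_irrefl of_int_floor_le order_le_less)
  define C where "C = - (2 * of_real pi * \<i> * of_int k)"
  have Vc: "Vf p \<epsilon> k = (\<lambda>z. exp (C * z)) \<circ> (\<lambda>x. of_real (rho \<eta> ((x-p)/(2*pi))))"
    by (auto simp: Vf_def C_def \<eta>_def)
  have ch: "\<And>r D. (r has_real_derivative D) (at s) \<Longrightarrow>
      ((\<lambda>x. of_real (r ((x-p)/(2*pi))) :: complex) has_vector_derivative of_real (D * (1/(2*pi)))) (at x)"
  proof -
    fix r D assume r': "(r has_real_derivative D) (at s)"
    have dg: "((\<lambda>x. (x-p)/(2*pi)) has_real_derivative 1/(2*pi)) (at x)"
      by (auto intro!: derivative_eq_intros)
    from DERIV_chain2[OF r'[unfolded s_def] dg]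
    have "((\<lambda>x. r ((x-p)/(2*pi))) has_real_derivative D * (1/(2*pi))) (at x)" .
    then show "((\<lambda>x. of_real (r ((x-p)/(2*pi))) :: complex) has_vector_derivative of_real (D * (1/(2*pi)))) (at x)"
      by (rule has_vector_derivative_of_real)
  qed
  have eg: "((\<lambda>z. exp (C * z)) has_field_derivative C * exp (C * z)) (at z)" for z
    by (auto intro!: derivative_eq_intros)
  show ?thesis
  proof (cases "s < n + \<eta>")
    case True
    have "(rho \<eta> has_real_derivative 1/\<eta>) (at s)" using rho_deriv1[OF et sn(1) True] .
    from field_vector_diff_chain_at[OF ch[OF this] eg]
    have "(Vf p \<epsilon> k has_vector_derivative of_real (1/\<eta> * (1/(2*pi))) * (C * Vf p \<epsilon> k x)) (at x)"
      unfolding Vc by (simp add: o_def)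
    moreover have "wfn p \<epsilon> k x = of_real (1/\<eta> * (1/(2*pi))) * (C * Vf p \<epsilon> k x)"
      using True sn eps unfolding wfn_def fr_def s_def[symmetric] n_def[symmetric] \<eta>_def[symmetric] C_def
      by (simp add: \<eta>_def field_simps)
    ultimately show ?thesis by simp
  next
    case False
    then have F: "n + \<eta> < s" using assms(2) unfolding fr_def s_def[symmetric] n_def[symmetric] \<eta>_def[symmetric] by auto
    have "(rho \<eta> has_real_derivative 0) (at s)" using rho_deriv0[OF et F sn(2)] .
    from field_vector_diff_chain_at[OF ch[OF this] eg]
    have "(Vf p \<epsilon> k has_vector_derivative of_real (0 * (1/(2*pi))) * (C * Vf p \<epsilon> k x)) (at x)"
      unfolding Vc by (simp add: o_def)
    moreover have "wfn p \<epsilon> k x = 0"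
      using False unfolding wfn_def fr_def s_def[symmetric] n_def[symmetric] \<eta>_def[symmetric] by auto
    ultimately show ?thesis by simp
  qed
qed

lemma V_FTC:
  assumes ab: "a \<le> b"
  shows "Vf p \<epsilon> k b - Vf p \<epsilon> k a = (LINT x:{a..b}|lborel. wfn p \<epsilon> k x)"
proof -
  define S where "S = {x \<in> {a..b}. fr ((x-p)/(2*pi)) = 0 \<or> fr ((x-p)/(2*pi)) = \<epsilon>/(2*pi)}"
  define R where "R = {\<lfloor>(a-p)/(2*pi)\<rfloor>..\<lfloor>(b-p)/(2*pi)\<rfloor>}"
  have sub: "S \<subseteq> (\<lambda>m. p + 2*pi * of_int m) ` R \<union> (\<lambda>m. p + \<epsilon> + 2*pi * of_int m) ` R"
  proof
    fix x assume x: "x \<in> S"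
    define m where "m = \<lfloor>(x-p)/(2*pi)\<rfloor>"
    have "(a-p)/(2*pi) \<le> (x-p)/(2*pi)" "(x-p)/(2*pi) \<le> (b-p)/(2*pi)"
      using x unfolding S_def by (auto intro: divide_right_mono)
    then have mR: "m \<in> R" unfolding R_def m_def by (auto intro: floor_mono)
    have "(x-p)/(2*pi) - m = 0 \<or> (x-p)/(2*pi) - m = \<epsilon>/(2*pi)"
      using x unfolding S_def fr_def m_def by auto
    then have "x = p + 2*pi * of_int m \<or> x = p + \<epsilon> + 2*pi * of_int m"
      by (auto simp: field_simps)
    then show "x \<in> (\<lambda>m. p + 2*pi * of_int m) ` R \<union> (\<lambda>m. p + \<epsilon> + 2*pi * of_int m) ` R"
      using mR by auto
  qed
  have fin: "finite S" by (rule finite_subset[OF sub]) (auto simp: R_def)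
  have hi: "(wfn p \<epsilon> k has_integral (Vf p \<epsilon> k b - Vf p \<epsilon> k a)) {a..b}"
  proof (rule fundamental_theorem_of_calculus_interior_strong[OF fin ab])
    show "continuous_on {a..b} (Vf p \<epsilon> k)" using V_cont by (rule continuous_on_subset) auto
    fix x assume "x \<in> {a<..<b} - S"
    then have "fr ((x-p)/(2*pi)) \<noteq> 0" "fr ((x-p)/(2*pi)) \<noteq> \<epsilon>/(2*pi)"
      unfolding S_def by auto
    then show "(Vf p \<epsilon> k has_vector_derivative wfn p \<epsilon> k x) (at x)" by (rule V_deriv)
  qed
  have "(LINT x:{a..b}|lborel. wfn p \<epsilon> k x) = integral {a..b} (wfn p \<epsilon> k)"
    by (rule set_borel_integral_eq_integral(2)[OF w_int])
  also have "\<dots> = Vf p \<epsilon> k b - Vf p \<epsilon> k a" using hi by (rule integral_unique)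
  finally show ?thesis by simp
qed

lemma V_win:
  assumes "p < x" "x < p + \<epsilon>"
  shows "Vf p \<epsilon> k x = exp (- (\<i> * of_real (2*pi*k/\<epsilon> * (x - p))))"
    and "wfn p \<epsilon> k x = - (\<i> * of_real (2*pi*k/\<epsilon>)) * Vf p \<epsilon> k x"
proof -
  have s: "0 < (x-p)/(2*pi)" "(x-p)/(2*pi) < \<epsilon>/(2*pi)" using assms eps pi_gt_zero
    by (auto simp: divide_strict_right_mono)
  have r: "rho (\<epsilon>/(2*pi)) ((x-p)/(2*pi)) = (x-p)/\<epsilon>"
    using rho_win[OF eta(1) less_imp_le[OF s(1)] less_imp_le[OF s(2)] eta(2)] eps by simp
  show "Vf p \<epsilon> k x = exp (- (\<i> * of_real (2*pi*k/\<epsilon> * (x - p))))"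
    unfolding Vf_def r by (simp add: field_simps)
  have "(x-p)/(2*pi) < 1" using s(2) eta(2) by linarith
  then have "\<lfloor>(x-p)/(2*pi)\<rfloor> = 0" using s by (simp add: floor_eq_iff)
  then have "fr ((x-p)/(2*pi)) = (x-p)/(2*pi)" by (simp add: fr_def)
  then show "wfn p \<epsilon> k x = - (\<i> * of_real (2*pi*k/\<epsilon>)) * Vf p \<epsilon> k x"
    unfolding wfn_def using s by (simp add: mult_ac)
qed

lemma V_out:
  assumes "0 < p" "p + \<epsilon> \<le> 2*pi" "0 \<le> x" "x \<le> 2*pi" "\<not> (p < x \<and> x < p + \<epsilon>)"
  shows "Vf p \<epsilon> k x = 1" "wfn p \<epsilon> k x = 0"
proof -
  define s where "s = (x-p)/(2*pi)"
  have "rho (\<epsilon>/(2*pi)) s \<in> \<int> \<and> \<not> (0 < fr s \<and> fr s < \<epsilon>/(2*pi))"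
  proof (cases "x \<le> p")
    case True
    have "x - p > - 2*pi" using assms eps by linarith
    then have s1: "-1 < s" "s \<le> 0" using assms True pi_gt_zero unfolding s_def
      by (auto simp: divide_nonpos_pos less_divide_eq)
    show ?thesis
    proof (cases "s = 0")
      case True then show ?thesis by (simp add: rho_def fr_def)
    next
      case False
      then have fl: "\<lfloor>s\<rfloor> = -1" using s1 by (simp add: floor_eq_iff)
      have "x - p + 2*pi \<ge> \<epsilon>" using assms by linarith
      then have "(x - p + 2*pi)/(2*pi) \<ge> \<epsilon>/(2*pi)" using pi_gt_zero by (intro divide_right_mono) auto
      then have "s + 1 \<ge> \<epsilon>/(2*pi)" unfolding s_def by (simp add: add_divide_distrib)
      then have "(s + 1)/(\<epsilon>/(2*pi)) \<ge> 1" using le_divide_eq_1_pos[OF eta(1)] by blast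
      then have "rho (\<epsilon>/(2*pi)) s = 0" using fl by (simp add: rho_def)
      moreover have "\<not> fr s < \<epsilon>/(2*pi)" using \<open>s + 1 \<ge> \<epsilon>/(2*pi)\<close> fl by (simp add: fr_def)
      ultimately show ?thesis by simp
    qed
  next
    case False
    then have "x \<ge> p + \<epsilon>" using assms by auto
    then have s1: "\<epsilon>/(2*pi) \<le> s" "s < 1" using assms pi_gt_zero unfolding s_def
      by (auto simp: divide_right_mono divide_less_eq)
    then have fl: "\<lfloor>s\<rfloor> = 0" using eta by (simp add: floor_eq_iff)
    have "s/(\<epsilon>/(2*pi)) \<ge> 1" using s1 le_divide_eq_1_pos[OF eta(1)] by blast
    then have "rho (\<epsilon>/(2*pi)) s = 1" using fl by (simp add: rho_def)
    moreover have "\<not> fr s < \<epsilon>/(2*pi)" using s1 fl by (simp add: fr_def)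
    ultimately show ?thesis by simp
  qed
  then obtain j :: int where j: "rho (\<epsilon>/(2*pi)) s = of_int j" and nw: "\<not> (0 < fr s \<and> fr s < \<epsilon>/(2*pi))"
    by (auto elim: Ints_cases)
  have "Vf p \<epsilon> k x = exp (- (\<i> * (of_int (k*j) * (of_real pi * 2))))"
    unfolding Vf_def s_def[symmetric] j by (simp add: mult_ac)
  also have "\<dots> = 1" by (simp only: exp_minus exp_2pi_1_int) simp
  finally show "Vf p \<epsilon> k x = 1" .
  show "wfn p \<epsilon> k x = 0" using nw unfolding wfn_def s_def[symmetric] by auto
qed

end





lemma set_integrable_shift:
  fixes F :: "real \<Rightarrow> complex"
  shows "set_integrable lborel {a..b} (\<lambda>s. F (s + T)) \<longleftrightarrow> set_integrable lborel {a+T..b+T} F"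
proof -
  have "set_integrable lborel {a+T..b+T} F \<longleftrightarrow>
      integrable lborel (\<lambda>x. indicator {a+T..b+T} (T + 1 * x) *\<^sub>R F (T + 1 * x))"
    unfolding set_integrable_def
    using lborel_integrable_real_affine_iff[where c=1 and t=T and f="\<lambda>y. indicator {a+T..b+T} y *\<^sub>R F y"]
    by simp
  also have "(\<lambda>x. indicator {a+T..b+T} (T + 1 * x) *\<^sub>R F (T + 1 * x)) = (\<lambda>x. indicator {a..b} x *\<^sub>R F (x + T))"
    by (auto simp: indicator_def add.commute)
  finally show ?thesis unfolding set_integrable_def by simp
qed

lemma set_integral_shift:
  fixes F :: "real \<Rightarrow> 'a :: {banach, second_countable_topology}"
  shows "(LINT s:{a..b}|lborel. F (s + T)) = (LINT s:{a+T..b+T}|lborel. F s)"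
proof -
  have "(LINT s:{a+T..b+T}|lborel. F s) = \<bar>1::real\<bar> *\<^sub>R (\<integral>x. indicator {a+T..b+T} (T + 1 * x) *\<^sub>R F (T + 1 * x) \<partial>lborel)"
    unfolding set_lebesgue_integral_def
    using lborel_integral_real_affine[where c=1 and t=T and f="\<lambda>y. indicator {a+T..b+T} y *\<^sub>R F y"]
    by simp
  also have "(\<lambda>x. indicator {a+T..b+T} (T + 1 * x) *\<^sub>R F (T + 1 * x)) = (\<lambda>x. indicator {a..b} x *\<^sub>R F (x + T))"
    by (auto simp: indicator_def add.commute)
  finally show ?thesis unfolding set_lebesgue_integral_def by simp
qed

lemma W11_per_nat:
  assumes "W11_S1 f g" shows "f (x + 2*pi*real n) = f x"
proof (induction n)
  case (Suc n)
  have "f (x + 2*pi*real (Suc n)) = f ((x + 2*pi*real n) + 2*pi)" by (simp add: algebra_simps)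
  also have "\<dots> = f (x + 2*pi*real n)" using assms unfolding W11_S1_def by blast
  finally show ?case using Suc by simp
qed simp

lemma W11_per:
  assumes "W11_S1 f g" shows "f (x + 2*pi * of_int m) = f x"
proof (cases "m \<ge> 0")
  case True
  then obtain n where "m = int n" by (metis nonneg_int_cases)
  then show ?thesis using W11_per_nat[OF assms] by simp
next
  case False
  then have "m \<le> 0" by simp
  then obtain n where n: "m = - int n" using nonpos_int_cases by blast
  have "f x = f ((x + 2*pi * of_int m) + 2*pi*real n)" by (simp add: n)
  also have "\<dots> = f (x + 2*pi * of_int m)" by (rule W11_per_nat[OF assms])
  finally show ?thesis ..
qed

lemma W11_shift:
  assumes W: "W11_S1 f g" and T: "T = 2*pi * of_int m"
  shows "W11_S1 f (\<lambda>s. g (s + T))"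
  unfolding W11_S1_def
proof (intro conjI allI impI)
  show "f (x + 2 * pi) = f x" "cmod (f x) = 1" for x using W unfolding W11_S1_def by auto
  show "set_integrable lborel {a..b} (\<lambda>s. g (s + T))" for a b
    unfolding set_integrable_shift using W unfolding W11_S1_def by blast
  fix a b :: real assume "a \<le> b"
  have "f b - f a = f (b + T) - f (a + T)" using W11_per[OF W] T by simp
  also have "\<dots> = (LINT s:{a+T..b+T}|lborel. g s)" using W \<open>a \<le> b\<close> unfolding W11_S1_def by auto
  also have "\<dots> = (LINT s:{a..b}|lborel. g (s + T))" by (rule set_integral_shift[symmetric])
  finally show "f b - f a = (LINT s:{a..b}|lborel. g (s + T))" .
qed

lemma lebesgue_point_shift:
  assumes "lebesgue_point g \<zeta>"
  shows "lebesgue_point (\<lambda>s. g (s + T)) (\<zeta> - T)"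
proof -
  have "(LINT s:{\<zeta> - T - r..\<zeta> - T + r}|lborel. cmod (g (s + T) - g (\<zeta> - T + T)))
      = (LINT s:{\<zeta>-r..\<zeta>+r}|lborel. cmod (g s - g \<zeta>))" for r
    using set_integral_shift[where F="\<lambda>s. cmod (g s - g \<zeta>)" and a="\<zeta> - T - r" and b="\<zeta> - T + r" and T=T] by simp
  then show ?thesis using assms unfolding lebesgue_point_def by simp
qed

lemma W11_cont:
  assumes W: "W11_S1 f g" shows "continuous_on UNIV f"
proof (rule continuous_at_imp_continuous_on, clarify)
  fix x0 :: real
  define a where "a = x0 - 1"
  define b where "b = x0 + 1"
  have gi: "g integrable_on {a..b}"
    using W set_borel_integral_eq_integral(1) unfolding W11_S1_def by blast
  have c1: "continuous_on {a..b} (\<lambda>x. f a + integral {a..x} g)"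
    by (intro continuous_intros indefinite_integral_continuous_1[OF gi])
  have "continuous_on {a..b} f"
  proof (rule continuous_on_cong[THEN iffD1, rotated 2])
    fix x assume x: "x \<in> {a..b}"
    have si: "set_integrable lborel {a..x} g" using W unfolding W11_S1_def by blast
    have "f x - f a = (LINT s:{a..x}|lborel. g s)" using W x unfolding W11_S1_def by auto
    also have "\<dots> = integral {a..x} g" by (rule set_borel_integral_eq_integral(2)[OF si])
    finally show "f a + integral {a..x} g = f x" by (simp add: algebra_simps)
  qed (use c1 in auto)
  then have "continuous_on {a<..<b} f" by (rule continuous_on_subset) auto
  moreover have "open {a<..<b}" "x0 \<in> {a<..<b}" by (auto simp: a_def b_def)
  ultimately show "isCont f x0" using continuous_on_eq_continuous_at by blast
qed




lemma W11_int: "W11_S1 f g \<Longrightarrow> set_integrable lborel {a..b} g"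
  unfolding W11_S1_def by blast

lemma const_int: "set_integrable lborel {a..b::real} (\<lambda>_. c::complex)"
  unfolding set_integrable_def
proof (rule integrableI_bounded_set_indicator[where B="norm c"])
  show "{a..b} \<in> sets lborel" by simp
  show "emeasure lborel {a..b} < \<infinity>" by (simp add: emeasure_lborel_Icc_eq)
qed auto

lemma dev_int:
  assumes "W11_S1 f g" shows "set_integrable lborel {a..b} (\<lambda>s. cmod (g s - c))"
  by (intro set_integrable_norm set_integral_diff(1) W11_int[OF assms] const_int)

lemma const_integral: "a \<le> b \<Longrightarrow> (LINT s:{a..b::real}|lborel. (c::complex)) = of_real (b - a) * c"
  by (subst set_integral_const) (auto simp: emeasure_lborel_Icc_eq scaleR_conv_of_real)

lemma LP_sub:
  assumes W: "W11_S1 f g" and "x - r \<le> c" "c \<le> d" "d \<le> x + r"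
  shows "(LINT s:{c..d}|lborel. cmod (g s - g x)) \<le> (LINT s:{x-r..x+r}|lborel. cmod (g s - g x))"
proof -
  have i1: "integrable lborel (\<lambda>s. indicator {c..d} s *\<^sub>R cmod (g s - g x))"
    using dev_int[OF W] unfolding set_integrable_def by blast
  have i2: "integrable lborel (\<lambda>s. indicator {x-r..x+r} s *\<^sub>R cmod (g s - g x))"
    using dev_int[OF W] unfolding set_integrable_def by blast
  show ?thesis unfolding set_lebesgue_integral_def
    by (rule integral_mono[OF i1 i2]) (use assms in \<open>auto simp: indicator_def\<close>)
qed

lemma LP_event:
  assumes "lebesgue_point g x" "0 < \<delta>"
  shows "eventually (\<lambda>r. (LINT s:{x-r..x+r}|lborel. cmod (g s - g x)) < 2*r*\<delta>) (at_right 0)"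
proof -
  have "eventually (\<lambda>r. dist ((LINT s:{x-r..x+r}|lborel. cmod (g s - g x)) / (2*r)) 0 < \<delta>) (at_right 0)"
    using assms unfolding lebesgue_point_def tendsto_iff by blast
  moreover have "eventually (\<lambda>r::real. 0 < r) (at_right 0)" by (simp add: eventually_at_right_less)
  ultimately show ?thesis
  proof eventually_elim
    case (elim r)
    define A where "A = (LINT s:{x-r..x+r}|lborel. cmod (g s - g x))"
    have "\<bar>A\<bar> / (2*r) < \<delta>" using elim by (simp add: A_def)
    moreover have "A / (2*r) \<le> \<bar>A\<bar> / (2*r)" using elim by (intro divide_right_mono) auto
    ultimately have "A / (2*r) < \<delta>" by linarith
    then show ?case using elim unfolding A_def[symmetric] by (simp add: divide_less_eq mult_ac)
  qed
qed

lemma orth: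
  assumes W: "W11_S1 f g" and L: "lebesgue_point g x"
  shows "g x = \<i> * of_real (wedge (f x) (g x)) * f x"
proof -
  define c where "c = f x"
  define \<gamma> where "\<gamma> = g x"
  define \<rho> where "\<rho> = Re (cnj c * \<gamma>)"
  have c1: "cmod c = 1" using W unfolding W11_S1_def c_def by blast
  have key: "2 * r * \<bar>\<rho>\<bar> \<le> 4 * r * D + (r * cmod \<gamma> + 2 * r * D)^2"
    if r: "0 < r" and D: "(LINT s:{x-r..x+r}|lborel. cmod (g s - g x)) < 2*r*D" for r D
  proof -
    define e where "e = (LINT s:{x..x+r}|lborel. g s - \<gamma>)"
    have ne: "cmod e \<le> 2 * r * D"
    proof -
      have "cmod e \<le> (LINT s:{x..x+r}|lborel. cmod (g s - \<gamma>))"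
        unfolding e_def by (rule set_integral_norm_bound) (intro set_integral_diff(1) W11_int[OF W] const_int)
      also have "\<dots> \<le> (LINT s:{x-r..x+r}|lborel. cmod (g s - g x))"
        unfolding \<gamma>_def by (rule LP_sub[OF W]) (use r in auto)
      finally show ?thesis using D by simp
    qed
    have "f (x + r) - c = (LINT s:{x..x+r}|lborel. g s)" using W r unfolding W11_S1_def c_def by simp
    also have "\<dots> = e + of_real r * \<gamma>"
    proof -
      have "e = (LINT s:{x..x+r}|lborel. g s) - (LINT s:{x..x+r}|lborel. \<gamma>)"
        unfolding e_def by (rule set_integral_diff(2)[OF W11_int[OF W] const_int])
      moreover have "(LINT s:{x..x+r}|lborel. \<gamma>) = of_real r * \<gamma>"
        using const_integral[of x "x+r" \<gamma>] r by simp
      ultimately show ?thesis by simp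
    qed
    finally have fe: "f (x + r) = c + (e + of_real r * \<gamma>)" by (simp add: algebra_simps)
    define v where "v = e + of_real r * \<gamma>"
    have "cmod (f (x + r)) = 1" using W unfolding W11_S1_def by blast
    then have "1 = (cmod (c + v))^2" using fe unfolding v_def by simp
    also have "\<dots> = (cmod c)^2 + 2 * Re (cnj c * v) + (cmod v)^2"
      by (simp only: cmod_power2) (simp add: power2_eq_square algebra_simps)
    finally have eq: "0 = 2 * Re (cnj c * v) + (cmod v)^2" using c1 by simp
    have rv: "Re (cnj c * v) = Re (cnj c * e) + r * \<rho>" unfolding v_def \<rho>_def by (simp add: algebra_simps)
    have ce: "\<bar>Re (cnj c * e)\<bar> \<le> cmod e"
      using abs_Re_le_cmod[of "cnj c * e"] c1 by (simp add: norm_mult)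
    have nv: "cmod v \<le> r * cmod \<gamma> + 2 * r * D"
      unfolding v_def using ne norm_triangle_ineq[of e "of_real r * \<gamma>"] r by (simp add: norm_mult)
    have nv2: "(cmod v)^2 \<le> (r * cmod \<gamma> + 2 * r * D)^2"
      using nv by (intro power_mono) auto
    have zz: "2 * r * \<rho> = - 2 * Re (cnj c * e) - (cmod v)^2" using eq rv by simp
    have gen: "\<And>X Y Z::real. Z = -2*X - Y \<Longrightarrow> 0 \<le> Y \<Longrightarrow> \<bar>Z\<bar> \<le> 2*\<bar>X\<bar> + Y" by arith
    have "\<bar>2 * r * \<rho>\<bar> \<le> 2 * \<bar>Re (cnj c * e)\<bar> + (cmod v)^2" by (rule gen[OF zz]) simp
    moreover have "\<bar>2 * r * \<rho>\<bar> = 2 * r * \<bar>\<rho>\<bar>" using r by (simp add: abs_mult)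
    ultimately show ?thesis using ce ne nv2 by linarith
  qed
  have "\<rho> = 0"
  proof (rule ccontr)
    assume "\<rho> \<noteq> 0"
    then have rp: "0 < \<bar>\<rho>\<bar>" by simp
    define D where "D = min 1 (\<bar>\<rho>\<bar>/8)"
    have Dp: "0 < D" using rp by (simp add: D_def)
    have Xp: "0 < cmod \<gamma> + 2" using norm_ge_zero[of \<gamma>] by linarith
    define B where "B = \<bar>\<rho>\<bar> / (cmod \<gamma> + 2)^2"
    have Bp: "0 < B" unfolding B_def using rp Xp by (intro divide_pos_pos) auto
    have ev: "eventually (\<lambda>r. (LINT s:{x-r..x+r}|lborel. cmod (g s - g x)) < 2*r*D) (at_right 0)"
      by (rule LP_event[OF L Dp])
    moreover have "eventually (\<lambda>r::real. 0 < r) (at_right 0)" by (rule eventually_at_right_less)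
    moreover have "eventually (\<lambda>r::real. r < B) (at_right 0)"
      unfolding eventually_at_right_field using Bp by blast
    ultimately have "eventually (\<lambda>r. (LINT s:{x-r..x+r}|lborel. cmod (g s - g x)) < 2*r*D \<and> 0 < r \<and> r < B) (at_right 0)"
      by eventually_elim auto
    then obtain r where r: "(LINT s:{x-r..x+r}|lborel. cmod (g s - g x)) < 2*r*D" "0 < r" "r < B"
      using eventually_happens'[OF trivial_limit_at_right_real] by blast
    have k: "2 * r * \<bar>\<rho>\<bar> \<le> 4 * r * D + (r * cmod \<gamma> + 2 * r * D)^2" by (rule key[OF r(2) r(1)])
    have e1: "r * cmod \<gamma> + 2 * r * D = r * (cmod \<gamma> + 2 * D)" by (simp add: algebra_simps)
    have "(r * cmod \<gamma> + 2 * r * D)^2 = r * (r * (cmod \<gamma> + 2 * D)^2)" unfolding e1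
      by (simp add: power_mult_distrib power2_eq_square)
    also have "r * (cmod \<gamma> + 2 * D)^2 \<le> r * (cmod \<gamma> + 2)^2"
      using r(2) Dp by (intro mult_left_mono power_mono) (auto simp: D_def)
    also have "r * (cmod \<gamma> + 2)^2 < B * (cmod \<gamma> + 2)^2"
      using r(3) Xp by (intro mult_strict_right_mono) auto
    also have "B * (cmod \<gamma> + 2)^2 = \<bar>\<rho>\<bar>"
    proof -
      have "(cmod \<gamma> + 2)^2 \<noteq> 0" using Xp by simp
      then show ?thesis unfolding B_def by simp
    qed
    finally have A: "(r * cmod \<gamma> + 2 * r * D)^2 < r * \<bar>\<rho>\<bar>" using r(2) by (simp add: mult_strict_left_mono)
    have "D \<le> \<bar>\<rho>\<bar>/8" by (simp add: D_def)
    then have "4 * r * D \<le> 4 * r * (\<bar>\<rho>\<bar>/8)" using r(2) by (intro mult_left_mono) auto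
    moreover have "4 * r * (\<bar>\<rho>\<bar>/8) = r * \<bar>\<rho>\<bar> / 2" by simp
    moreover have "0 < r * \<bar>\<rho>\<bar>" using rp r(2) by simp
    ultimately show False using k A by linarith
  qed
  have A: "cnj c * \<gamma> = \<i> * of_real (wedge c \<gamma>)"
    using \<open>\<rho> = 0\<close> unfolding \<rho>_def wedge_def complex_eq_iff by simp
  have B: "c * cnj c = 1"
    using c1 complex_norm_square[of c] by simp
  have "\<gamma> = (c * cnj c) * \<gamma>" using B by simp
  also have "\<dots> = c * (cnj c * \<gamma>)" by (rule mult.assoc)
  also have "\<dots> = \<i> * of_real (wedge c \<gamma>) * c" unfolding A by simp
  finally show ?thesis unfolding c_def \<gamma>_def .
qed




lemma cmod_exp_ii:
  fixes a w t :: real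
  shows "(cmod (of_real a - of_real w * (1 - exp (\<i> * of_real t))))^2 = (a - w * (1 - cos t))^2 + (w * sin t)^2"
proof -
  have "of_real a - of_real w * (1 - exp (\<i> * of_real t)) = Complex (a - w * (1 - cos t)) (w * sin t)"
    by (simp add: complex_eq_iff exp_Euler cos_of_real sin_of_real Re_exp Im_exp)
  then show ?thesis by (simp add: cmod_def)
qed

lemma cmod_1_exp_ii: "cmod (1 - exp (\<i> * of_real t)) \<le> \<bar>t\<bar>"
proof -
  have "(cmod (1 - exp (\<i> * of_real t)))^2 = (1 - cos t)^2 + (sin t)^2"
    using cmod_exp_ii[of 0 "-1" t] by simp
  also have "\<dots> = 2 - 2 * cos t" using sin_cos_squared_add[of t] by (simp add: power2_eq_square algebra_simps)
  also have "cos t = 1 - 2 * (sin (t/2))^2" using cos_double_sin[of "t/2"] by simp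
  also have "2 - 2 * (1 - 2 * (sin (t/2))^2) = 4 * (sin (t/2))^2" by simp
  also have "\<dots> \<le> 4 * (t/2)^2"
    using abs_sin_x_le_abs_x[of "t/2"] unfolding abs_le_square_iff by simp
  also have "\<dots> = \<bar>t\<bar>^2" by (simp add: power2_eq_square)
  finally show ?thesis by (rule power2_le_imp_le) simp
qed

lemma key_ineq:
  fixes a w t :: real
  assumes aw: "0 < a * w"
  shows "cmod (of_real a - of_real w * (1 - exp (\<i> * of_real t)))
     \<le> \<bar>a\<bar> - \<bar>w\<bar> * (1 - cos t) + w^2 * (1 - cos t) / \<bar>a\<bar>"
proof -
  define c where "c = 1 - cos t"
  have c0: "0 \<le> c" "c \<le> 2" unfolding c_def using cos_le_one[of t] cos_ge_minus_one[of t] by linarith+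
  have s2: "(sin t)^2 = c * (2 - c)" unfolding c_def using sin_cos_squared_add[of t]
    by (simp add: power2_eq_square algebra_simps)
  have ap: "0 < \<bar>a\<bar>" using aw by auto
  have aw': "a * w = \<bar>a\<bar> * \<bar>w\<bar>" using aw by (simp add: abs_mult[symmetric])
  have z2: "(cmod (of_real a - of_real w * (1 - exp (\<i> * of_real t))))^2 = a^2 - 2 * (a * w) * c + 2 * w^2 * c"
    unfolding cmod_exp_ii c_def[symmetric] power_mult_distrib s2 by (simp add: power2_eq_square algebra_simps)
  define X where "X = \<bar>w\<bar> * c - w^2 * c / \<bar>a\<bar>"
  define R where "R = \<bar>a\<bar> - \<bar>w\<bar> * c + w^2 * c / \<bar>a\<bar>"
  have RX: "R = \<bar>a\<bar> - X" unfolding R_def X_def by simp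
  have "R^2 = a^2 - 2 * \<bar>a\<bar> * X + X^2" unfolding RX by (simp add: power2_eq_square algebra_simps)
  also have "2 * \<bar>a\<bar> * X = 2 * (\<bar>a\<bar> * \<bar>w\<bar>) * c - 2 * w^2 * c"
    unfolding X_def using ap by (simp add: algebra_simps)
  finally have R2: "R^2 = (a^2 - 2 * (a * w) * c + 2 * w^2 * c) + X^2" unfolding aw' by simp
  have num: "0 \<le> a^2 - \<bar>a\<bar> * \<bar>w\<bar> * c + w^2 * c"
  proof -
    have "a^2 - \<bar>a\<bar> * \<bar>w\<bar> * c + w^2 * c = (\<bar>a\<bar> - c * \<bar>w\<bar> / 2)^2 + c * w^2 * (1 - c/4)"
      by (simp add: power2_eq_square algebra_simps)
    also have "\<dots> \<ge> 0" using c0 by (intro add_nonneg_nonneg mult_nonneg_nonneg) auto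
    finally show ?thesis .
  qed
  have "R = (a^2 - \<bar>a\<bar> * \<bar>w\<bar> * c + w^2 * c) / \<bar>a\<bar>"
    unfolding R_def using ap by (simp add: field_simps power2_eq_square)
  then have R0: "0 \<le> R" using num ap by simp
  have "(cmod (of_real a - of_real w * (1 - exp (\<i> * of_real t))))^2 \<le> R^2"
    unfolding z2 R2 by simp
  then have "cmod (of_real a - of_real w * (1 - exp (\<i> * of_real t))) \<le> R"
    by (rule power2_le_imp_le[OF _ R0])
  then show ?thesis unfolding R_def c_def .
qed




lemma set_int_bounded:
  fixes h :: "real \<Rightarrow> 'b::{banach, second_countable_topology}"
  assumes "h \<in> borel_measurable borel" "\<And>x. x \<in> {a..b} \<Longrightarrow> norm (h x) \<le> M"
  shows "set_integrable lborel {a..b} h"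
  unfolding set_integrable_def
proof (rule integrableI_bounded_set_indicator[where B=M])
  show "{a..b} \<in> sets lborel" by simp
  show "emeasure lborel {a..b} < \<infinity>" by (simp add: emeasure_lborel_Icc_eq)
  show "h \<in> borel_measurable lborel" using assms(1) by simp
qed (use assms(2) in auto)

lemma set_int_mult_bounded:
  fixes g m :: "real \<Rightarrow> complex"
  assumes gi: "set_integrable lborel {a..b} g" and mm: "m \<in> borel_measurable borel"
    and mb: "\<And>x. x \<in> {a..b} \<Longrightarrow> norm (m x) \<le> M"
  shows "set_integrable lborel {a..b} (\<lambda>x. g x * m x)"
proof -
  define gI where "gI x = indicator {a..b} x *\<^sub>R g x" for x
  have gIi: "integrable lborel gI" using gi unfolding set_integrable_def gI_def[abs_def] .
  have gIm: "gI \<in> borel_measurable borel" using gIi by (simp add: borel_measurable_integrable)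
  have b: "norm (gI x * m x) \<le> norm (M * gI x)" for x
  proof (cases "x \<in> {a..b}")
    case True
    then have "norm (m x) \<le> \<bar>M\<bar>" using mb[of x] by linarith
    then show ?thesis using mult_left_mono[of "norm (m x)" "\<bar>M\<bar>" "norm (gI x)"]
      by (simp add: norm_mult mult.commute)
  qed (simp add: gI_def)
  have "integrable lborel (\<lambda>x. gI x * m x)"
    by (rule Bochner_Integration.integrable_bound[OF integrable_mult_right[OF gIi, of M]])
       (use b gIm mm in auto)
  moreover have "(\<lambda>x. gI x * m x) = (\<lambda>x. indicator {a..b} x *\<^sub>R (g x * m x))"
    by (auto simp: gI_def indicator_def)
  ultimately show ?thesis unfolding set_integrable_def by simp
qed

lemma set_int_mono_sub:
  fixes h :: "real \<Rightarrow> real"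
  assumes i1: "set_integrable lborel {c..d} h" and i2: "set_integrable lborel {c'..d'} h"
    and nn: "\<And>x. 0 \<le> h x" and "c \<le> c'" "d' \<le> d"
  shows "(LINT s:{c'..d'}|lborel. h s) \<le> (LINT s:{c..d}|lborel. h s)"
  unfolding set_lebesgue_integral_def
  by (rule integral_mono[OF i2[unfolded set_integrable_def] i1[unfolded set_integrable_def]])
     (use assms in \<open>auto simp: indicator_def\<close>)

lemma set_integral_const_real: "a \<le> b \<Longrightarrow> (LINT s:{a..b}|lborel. (C::real)) = (b - a) * C"
  by (subst set_integral_const) (auto simp: emeasure_lborel_Icc_eq)

lemma set_integral_le_const:
  fixes h :: "real \<Rightarrow> real"
  assumes "set_integrable lborel {a..b} h" "\<And>x. x \<in> {a..b} \<Longrightarrow> h x \<le> C" "a \<le> b"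
  shows "(LINT s:{a..b}|lborel. h s) \<le> (b - a) * C"
proof -
  have "(LINT s:{a..b}|lborel. h s) \<le> (LINT s:{a..b}|lborel. C)"
    by (rule set_integral_mono[OF assms(1)]) (use assms in \<open>auto intro: set_int_bounded[where M="\<bar>C\<bar>"]\<close>)
  also have "\<dots> = (b - a) * C" using assms(3) by (rule set_integral_const_real)
  finally show ?thesis .
qed

lemma set_integral_nonneg':
  fixes h :: "real \<Rightarrow> real"
  assumes "\<And>x. 0 \<le> h x" shows "0 \<le> (LINT s:A|lborel. h s)"
  unfolding set_lebesgue_integral_def using assms by (intro Bochner_Integration.integral_nonneg) (auto simp: indicator_def)

lemma cos_integral:
  fixes a p z :: real
  assumes "a \<noteq> 0" "p \<le> z" "sin (a * (z - p)) = 0"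
  shows "(LINT s:{p..z}|lborel. cos (a * (s - p))) = 0"
proof -
  have "(LINT s:{p..z}|lborel. cos (a * (s - p))) = sin (a * (z - p)) / a - sin (a * (p - p)) / a"
    unfolding set_lebesgue_integral_def
  proof (rule integral_FTC_atLeastAtMost[OF assms(2)])
    fix x show "((\<lambda>s. sin (a * (s - p)) / a) has_vector_derivative cos (a * (x - p))) (at x within {p..z})"
      using assms(1) by (auto intro!: derivative_eq_intros simp: has_real_derivative_iff_has_vector_derivative[symmetric])
  qed (intro continuous_intros)
  then show ?thesis using assms by simp
qed




lemma estimate:
  fixes f g :: "real \<Rightarrow> complex" and z \<epsilon> \<omega> Eb :: real and k :: int
  assumes W: "W11_S1 f g" and L: "lebesgue_point g z"
    and om: "\<omega> = wedge (f z) (g z)" and kw: "0 < of_int k * \<omega>"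
    and eps: "0 < \<epsilon>" "\<epsilon> < 2*pi" and pz: "0 < z - \<epsilon>" "z \<le> 2*pi"
    and Eb: "(LINT s:{z-\<epsilon>..z}|lborel. cmod (g s - g z)) \<le> Eb"
  shows "(LINT s:{0..2*pi}|lborel. cmod (g s * (Vf (z-\<epsilon>) \<epsilon> k s - 1) + f s * wfn (z-\<epsilon>) \<epsilon> k s))
     \<le> 2*pi*\<bar>k\<bar> - \<bar>\<omega>\<bar>*\<epsilon> + \<omega>^2*\<epsilon>^2/(2*pi*\<bar>k\<bar>) + 2*Eb + 2*\<omega>^2*\<epsilon>^2 + 2*pi*\<bar>k\<bar>*Eb + 2*pi*\<bar>k\<bar>*\<omega>^2*\<epsilon>^2"
proof -
  define p where "p = z - \<epsilon>"
  have zp: "z = p + \<epsilon>" unfolding p_def by simp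
  define V where "V = Vf p \<epsilon> k"
  define w where "w = wfn p \<epsilon> k"
  define F where "F s = g s * (V s - 1) + f s * w s" for s
  define a where "a = 2*pi*k/\<epsilon>"
  have k0: "k \<noteq> 0" using kw by auto
  have a0: "a \<noteq> 0" using k0 eps by (simp add: a_def)
  have aabs: "\<bar>a\<bar> * \<epsilon> = 2*pi*\<bar>k\<bar>" using eps by (simp add: a_def abs_mult)
  have aw: "0 < a * \<omega>"
  proof -
    have "a * \<omega> = (2*pi/\<epsilon>) * (of_int k * \<omega>)" by (simp add: a_def)
    then show ?thesis using kw eps by simp
  qed
  define c where "c = f z"
  define \<gamma> where "\<gamma> = g z"
  have c1: "cmod c = 1" using W unfolding W11_S1_def c_def by blast
  have \<gamma>c: "\<gamma> = \<i> * of_real \<omega> * c" unfolding \<gamma>_def c_def om by (rule orth[OF W L])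
  define fm where "fm s = c * exp (\<i> * of_real (\<omega> * (s - z)))" for s
  define gm where "gm s = \<i> * of_real \<omega> * fm s" for s
  have fm1: "cmod (fm s) = 1" for s unfolding fm_def using c1 by (simp add: norm_mult)
  have Vn: "cmod (V s) = 1" for s unfolding V_def using V_norm[OF eps] .
  have Eb0: "0 \<le> Eb" using Eb set_integral_nonneg'[of "\<lambda>s. cmod (g s - g z)" "{z-\<epsilon>..z}"] by simp
  have gm_b: "cmod (\<gamma> - gm s) \<le> \<omega>^2 * \<epsilon>" if s: "s \<in> {p..z}" for s
  proof -
    have "\<gamma> - gm s = (\<i> * of_real \<omega> * c) * (1 - exp (\<i> * of_real (\<omega> * (s - z))))"
      unfolding \<gamma>c gm_def fm_def by (simp add: algebra_simps)
    then have "cmod (\<gamma> - gm s) = \<bar>\<omega>\<bar> * cmod (1 - exp (\<i> * of_real (\<omega> * (s - z))))"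
      using c1 by (simp add: norm_mult)
    also have "\<dots> \<le> \<bar>\<omega>\<bar> * \<bar>\<omega> * (s - z)\<bar>" by (intro mult_left_mono cmod_1_exp_ii) auto
    also have "\<dots> = \<bar>\<omega>\<bar> * \<bar>\<omega>\<bar> * \<bar>s - z\<bar>" by (simp add: abs_mult)
    also have "\<dots> \<le> \<bar>\<omega>\<bar> * \<bar>\<omega>\<bar> * \<epsilon>" using s unfolding zp by (intro mult_left_mono) auto
    also have "\<dots> = \<omega>^2 * \<epsilon>" by (simp add: power2_eq_square)
    finally show ?thesis .
  qed
  have fm_d: "(fm has_vector_derivative gm x) (at x within X)" for x X
  proof -
    have e: "fm = (\<lambda>x. (\<lambda>u. c * exp (\<i> * of_real \<omega> * (u - of_real z))) (of_real x))"
      by (auto simp: fm_def algebra_simps)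
    have "((\<lambda>u. c * exp (\<i> * of_real \<omega> * (u - of_real z))) has_field_derivative gm x) (at (of_real x))"
      unfolding gm_def fm_def by (auto intro!: derivative_eq_intros simp: algebra_simps)
    then show ?thesis unfolding e by (rule has_vector_derivative_real_field)
  qed
  have gm_c: "continuous_on UNIV gm" unfolding gm_def[abs_def] fm_def[abs_def]
    by (intro continuous_intros)
  have f_b: "cmod (f s - fm s) \<le> Eb + \<omega>^2 * \<epsilon>^2" if s: "s \<in> {p..z}" for s
  proof -
    have sz: "s \<le> z" using s by auto
    have gmi: "set_integrable lborel {s..z} gm" by (rule borel_integrable_atLeastAtMost'[OF continuous_on_subset[OF gm_c]]) auto
    have fz: "f z - f s = (LINT t:{s..z}|lborel. g t)" using W sz unfolding W11_S1_def by blast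
    have fmz: "fm z - fm s = (LINT t:{s..z}|lborel. gm t)"
      unfolding set_lebesgue_integral_def
      by (rule integral_FTC_atLeastAtMost[OF sz, symmetric]) (use fm_d continuous_on_subset[OF gm_c] in auto)
    have "fm z = c" by (simp add: fm_def)
    then have "f s - fm s = (LINT t:{s..z}|lborel. gm t) - (LINT t:{s..z}|lborel. g t)"
      using fz fmz unfolding c_def by (simp add: algebra_simps)
    also have "\<dots> = (LINT t:{s..z}|lborel. gm t - g t)"
      by (rule set_integral_diff(2)[symmetric, OF gmi W11_int[OF W]])
    finally have e: "f s - fm s = (LINT t:{s..z}|lborel. gm t - g t)" .
    have i1: "set_integrable lborel {s..z} (\<lambda>t. cmod (g t - \<gamma>))" by (rule dev_int[OF W])
    have i2: "set_integrable lborel {s..z} (\<lambda>t. cmod (\<gamma> - gm t))"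
      by (rule borel_integrable_atLeastAtMost') (intro continuous_intros continuous_on_subset[OF gm_c], auto)
    have "cmod (f s - fm s) \<le> (LINT t:{s..z}|lborel. cmod (gm t - g t))"
      unfolding e by (rule set_integral_norm_bound[OF set_integral_diff(1)[OF gmi W11_int[OF W]]])
    also have "\<dots> \<le> (LINT t:{s..z}|lborel. cmod (g t - \<gamma>) + cmod (\<gamma> - gm t))"
    proof (rule set_integral_mono)
      show "set_integrable lborel {s..z} (\<lambda>t. cmod (gm t - g t))"
        by (intro set_integrable_norm set_integral_diff(1) gmi W11_int[OF W])
      show "set_integrable lborel {s..z} (\<lambda>t. cmod (g t - \<gamma>) + cmod (\<gamma> - gm t))"
        using i1 i2 by (rule set_integral_add)
      fix t show "cmod (gm t - g t) \<le> cmod (g t - \<gamma>) + cmod (\<gamma> - gm t)"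
        using norm_triangle_ineq[of "g t - \<gamma>" "\<gamma> - gm t"] by (simp add: norm_minus_commute)
    qed
    also have "\<dots> = (LINT t:{s..z}|lborel. cmod (g t - \<gamma>)) + (LINT t:{s..z}|lborel. cmod (\<gamma> - gm t))"
      by (rule set_integral_add(2)[OF i1 i2])
    also have "(LINT t:{s..z}|lborel. cmod (g t - \<gamma>)) \<le> Eb"
    proof -
      have "(LINT t:{s..z}|lborel. cmod (g t - \<gamma>)) \<le> (LINT t:{p..z}|lborel. cmod (g t - \<gamma>))"
        by (rule set_int_mono_sub[OF dev_int[OF W] i1]) (use s in auto)
      then show ?thesis using Eb unfolding p_def \<gamma>_def by simp
    qed
    also have "(LINT t:{s..z}|lborel. cmod (\<gamma> - gm t)) \<le> (z - s) * (\<omega>^2 * \<epsilon>)"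
      by (rule set_integral_le_const[OF i2 _ sz]) (use gm_b s in auto)
    also have "(z - s) * (\<omega>^2 * \<epsilon>) \<le> \<epsilon> * (\<omega>^2 * \<epsilon>)"
      using s unfolding zp by (intro mult_right_mono) auto
    finally show ?thesis by (simp add: power2_eq_square mult_ac)
  qed
  define Bd where "Bd s = \<bar>a\<bar> - \<bar>\<omega>\<bar> * (1 - cos (a * (s - p))) + \<omega>^2 * (1 - cos (a * (s - p))) / \<bar>a\<bar>
     + 2 * cmod (g s - \<gamma>) + 2 * \<omega>^2 * \<epsilon> + \<bar>a\<bar> * (Eb + \<omega>^2 * \<epsilon>^2)" for s
  have M0: "0 \<le> \<bar>a\<bar> - \<bar>\<omega>\<bar> * (1 - cos \<theta>) + \<omega>^2 * (1 - cos \<theta>) / \<bar>a\<bar>" for \<theta>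
    using key_ineq[OF aw, of \<theta>] norm_ge_zero[of "of_real a - of_real \<omega> * (1 - exp (\<i> * of_real \<theta>))"]
    by linarith
  have pt: "cmod (F s) \<le> Bd s" if s: "s \<in> {p..z}" for s
  proof (cases "p < s \<and> s < z")
    case True
    define \<theta> where "\<theta> = a * (s - p)"
    define E1 where "E1 = exp (\<i> * of_real \<theta>)"
    have E10: "E1 \<noteq> 0" by (simp add: E1_def)
    have Vs: "V s = inverse E1"
      using V_win(1)[OF eps, of p s] True unfolding V_def E1_def \<theta>_def a_def zp by (simp add: exp_minus)
    have ws: "w s = - (\<i> * of_real a) * V s"
      using V_win(2)[OF eps, of p s] True unfolding V_def w_def a_def zp by simp
    define Fm where "Fm = gm s * (V s - 1) + fm s * w s"
    have Fm_eq: "Fm = - (\<i> * fm s * V s) * (of_real a - of_real \<omega> * (1 - E1))"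
      unfolding Fm_def gm_def ws Vs using E10 by (simp add: field_simps)
    have "cmod Fm = cmod (of_real a - of_real \<omega> * (1 - E1))"
      unfolding Fm_eq using fm1[of s] Vn[of s] by (simp add: norm_mult)
    also have "\<dots> \<le> \<bar>a\<bar> - \<bar>\<omega>\<bar> * (1 - cos \<theta>) + \<omega>^2 * (1 - cos \<theta>) / \<bar>a\<bar>"
      unfolding E1_def by (rule key_ineq[OF aw])
    finally have Fmb: "cmod Fm \<le> \<bar>a\<bar> - \<bar>\<omega>\<bar> * (1 - cos \<theta>) + \<omega>^2 * (1 - cos \<theta>) / \<bar>a\<bar>" .
    have Fd: "F s = Fm + (g s - gm s) * (V s - 1) + (f s - fm s) * w s"
      unfolding F_def Fm_def by (simp add: algebra_simps)
    have V2: "cmod (V s - 1) \<le> 2" using norm_triangle_ineq4[of "V s" 1] Vn[of s] by simp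
    have wn: "cmod (w s) = \<bar>a\<bar>" unfolding ws using Vn[of s] by (simp add: norm_mult)
    have gg: "cmod (g s - gm s) \<le> cmod (g s - \<gamma>) + \<omega>^2 * \<epsilon>"
      using norm_triangle_ineq[of "g s - \<gamma>" "\<gamma> - gm s"] gm_b[OF s] by simp
    have "cmod (F s) \<le> cmod Fm + cmod ((g s - gm s) * (V s - 1)) + cmod ((f s - fm s) * w s)"
      unfolding Fd by (rule order_trans[OF norm_triangle_ineq add_right_mono[OF norm_triangle_ineq]])
    also have "cmod ((g s - gm s) * (V s - 1)) \<le> (cmod (g s - \<gamma>) + \<omega>^2 * \<epsilon>) * 2"
      unfolding norm_mult by (rule mult_mono[OF gg V2]) (use eps in \<open>auto intro!: add_nonneg_nonneg\<close>)
    also have "cmod ((f s - fm s) * w s) \<le> (Eb + \<omega>^2 * \<epsilon>^2) * \<bar>a\<bar>"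
      unfolding norm_mult wn by (rule mult_right_mono[OF f_b[OF s]]) auto
    finally show ?thesis using Fmb unfolding Bd_def \<theta>_def by (simp add: algebra_simps)
  next
    case False
    have "0 < p" using pz(1) unfolding p_def .
    moreover have "p + \<epsilon> \<le> 2*pi" using pz zp by simp
    moreover have "0 \<le> s" "s \<le> 2*pi" using s \<open>0 < p\<close> pz by auto
    moreover have "\<not> (p < s \<and> s < p + \<epsilon>)" using False zp by simp
    ultimately have "V s = 1" "w s = 0" using V_out[OF eps] unfolding V_def w_def by blast+
    then have "F s = 0" by (simp add: F_def)
    moreover have "0 \<le> Bd s"
    proof -
      have "0 \<le> 2 * \<omega>^2 * \<epsilon>" using eps by simp
      moreover have "0 \<le> \<bar>a\<bar> * (Eb + \<omega>^2 * \<epsilon>^2)" using Eb0 by simp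
      moreover have "0 \<le> 2 * cmod (g s - \<gamma>)" by simp
      ultimately show ?thesis unfolding Bd_def using M0[of "a * (s - p)"] by linarith
    qed
    ultimately show ?thesis by simp
  qed
  have p0: "0 < p" using pz(1) unfolding p_def .
  have F0: "F s = 0" if "s \<in> {0..2*pi}" "s \<notin> {p..z}" for s
  proof -
    have "p + \<epsilon> \<le> 2*pi" using pz zp by simp
    moreover have "\<not> (p < s \<and> s < p + \<epsilon>)" using that zp by auto
    ultimately have "V s = 1" "w s = 0" using V_out[OF eps p0] that unfolding V_def w_def by auto
    then show ?thesis by (simp add: F_def)
  qed
  have cong: "(LINT s:{0..2*pi}|lborel. cmod (F s)) = (LINT s:{p..z}|lborel. cmod (F s))"
    unfolding set_lebesgue_integral_def
  proof (rule Bochner_Integration.integral_cong[OF refl])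
    fix s
    show "indicator {0..2*pi} s *\<^sub>R cmod (F s) = indicator {p..z} s *\<^sub>R cmod (F s)"
    proof (cases "s \<in> {p..z}")
      case True
      then have "s \<in> {0..2*pi}" using p0 pz by auto
      then show ?thesis using True by simp
    next
      case False
      then show ?thesis using F0[of s] by (cases "s \<in> {0..2*pi}") auto
    qed
  qed
  have fc: "continuous_on UNIV f" by (rule W11_cont[OF W])
  have fn1: "cmod (f x) = 1" for x using W unfolding W11_S1_def by blast
  have Fi: "set_integrable lborel {p..z} (\<lambda>s. cmod (F s))"
  proof -
    have i1: "set_integrable lborel {p..z} (\<lambda>s. g s * (V s - 1))"
    proof (rule set_int_mult_bounded[OF W11_int[OF W], where M=2])
      show "(\<lambda>s. V s - 1) \<in> borel_measurable borel" unfolding V_def using V_meas[OF eps] by measurable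
      fix x show "cmod (V x - 1) \<le> 2" using norm_triangle_ineq4[of "V x" 1] Vn[of x] by simp
    qed
    have i2: "set_integrable lborel {p..z} (\<lambda>s. f s * w s)"
    proof (rule set_int_bounded[where M="2*pi*\<bar>k\<bar>/\<epsilon>"])
      have [measurable]: "f \<in> borel_measurable borel" using fc by (rule borel_measurable_continuous_onI)
      show "(\<lambda>s. f s * w s) \<in> borel_measurable borel" unfolding w_def using w_meas[OF eps] by measurable
      fix x show "cmod (f x * w x) \<le> 2*pi*\<bar>k\<bar>/\<epsilon>" unfolding norm_mult fn1 w_def using w_bound[OF eps] by simp
    qed
    show ?thesis unfolding F_def by (intro set_integrable_norm set_integral_add(1) i1 i2)
  qed
  define Q where "Q s = \<bar>a\<bar> - \<bar>\<omega>\<bar> + \<omega>^2 / \<bar>a\<bar> + 2 * \<omega>^2 * \<epsilon> + \<bar>a\<bar> * (Eb + \<omega>^2 * \<epsilon>^2)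
      + (\<bar>\<omega>\<bar> - \<omega>^2 / \<bar>a\<bar>) * cos (a * (s - p))" for s
  have BQ: "Bd s = Q s + 2 * cmod (g s - \<gamma>)" for s
    unfolding Bd_def Q_def by (simp add: algebra_simps add_divide_distrib diff_divide_distrib)
  have Qi: "set_integrable lborel {p..z} Q"
    unfolding Q_def by (rule borel_integrable_atLeastAtMost') (intro continuous_intros)
  have Di: "set_integrable lborel {p..z} (\<lambda>s. 2 * cmod (g s - \<gamma>))"
    using dev_int[OF W] by (rule set_integrable_mult_right)
  have Bi: "set_integrable lborel {p..z} Bd"
    unfolding BQ[abs_def] by (rule set_integral_add(1)[OF Qi Di])
  have intB: "(LINT s:{p..z}|lborel. Bd s) \<le> 2*pi*\<bar>k\<bar> - \<bar>\<omega>\<bar>*\<epsilon> + \<omega>^2*\<epsilon>^2/(2*pi*\<bar>k\<bar>) + 2*Eb + 2*\<omega>^2*\<epsilon>^2 + 2*pi*\<bar>k\<bar>*Eb + 2*pi*\<bar>k\<bar>*\<omega>^2*\<epsilon>^2"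
  proof -
    have pz': "p \<le> z" using eps zp by simp
    have ci: "set_integrable lborel {p..z} (\<lambda>s. cos (a * (s - p)))"
      by (rule borel_integrable_atLeastAtMost') (intro continuous_intros)
    have cos0: "(LINT s:{p..z}|lborel. cos (a * (s - p))) = 0"
    proof (rule cos_integral[OF a0 pz'])
      have "a * (z - p) = 2 * pi * real_of_int k" unfolding zp a_def using eps by simp
      then show "sin (a * (z - p)) = 0" by (simp add: sin_integer_2pi)
    qed
    define K0 where "K0 = \<bar>a\<bar> - \<bar>\<omega>\<bar> + \<omega>^2 / \<bar>a\<bar> + 2 * \<omega>^2 * \<epsilon> + \<bar>a\<bar> * (Eb + \<omega>^2 * \<epsilon>^2)"
    define K1 where "K1 = \<bar>\<omega>\<bar> - \<omega>^2 / \<bar>a\<bar>"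
    have "(LINT s:{p..z}|lborel. Q s) = (LINT s:{p..z}|lborel. K0 + K1 * cos (a * (s - p)))"
      unfolding Q_def K0_def K1_def by simp
    also have "\<dots> = (LINT s:{p..z}|lborel. K0) + K1 * (LINT s:{p..z}|lborel. cos (a * (s - p)))"
      using set_integral_add(2)[OF borel_integrable_atLeastAtMost'[OF continuous_on_const] set_integrable_mult_right[OF ci]]
      by simp
    also have "\<dots> = \<epsilon> * K0" using set_integral_const_real[OF pz'] cos0 zp by simp
    finally have IQ: "(LINT s:{p..z}|lborel. Q s) = \<epsilon> * K0" .
    have ID: "(LINT s:{p..z}|lborel. 2 * cmod (g s - \<gamma>)) \<le> 2 * Eb"
      using Eb unfolding p_def \<gamma>_def by simp
    have "(LINT s:{p..z}|lborel. Bd s) = (LINT s:{p..z}|lborel. Q s) + (LINT s:{p..z}|lborel. 2 * cmod (g s - \<gamma>))"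
      unfolding BQ by (rule set_integral_add(2)[OF Qi Di])
    also have "\<dots> \<le> \<epsilon> * K0 + 2 * Eb" using IQ ID by simp
    also have "\<epsilon> * K0 = 2*pi*\<bar>k\<bar> - \<bar>\<omega>\<bar>*\<epsilon> + \<omega>^2*\<epsilon>^2/(2*pi*\<bar>k\<bar>) + 2*\<omega>^2*\<epsilon>^2 + 2*pi*\<bar>k\<bar>*Eb + 2*pi*\<bar>k\<bar>*\<omega>^2*\<epsilon>^2"
    proof -
      have e1: "\<epsilon> * \<bar>a\<bar> = 2*pi*\<bar>k\<bar>" using aabs by (simp add: mult.commute)
      have e2: "\<epsilon> * (\<omega>^2 / \<bar>a\<bar>) = \<omega>^2*\<epsilon>^2/(2*pi*\<bar>k\<bar>)"
        unfolding aabs[symmetric] using a0 eps by (simp add: field_simps power2_eq_square)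
      have "\<epsilon> * K0 = \<epsilon> * \<bar>a\<bar> - \<bar>\<omega>\<bar>*\<epsilon> + \<epsilon> * (\<omega>^2 / \<bar>a\<bar>) + 2*\<omega>^2*\<epsilon>^2 + (\<epsilon> * \<bar>a\<bar>) * Eb + (\<epsilon> * \<bar>a\<bar>) * \<omega>^2*\<epsilon>^2"
        unfolding K0_def by (simp add: algebra_simps power2_eq_square)
      then show ?thesis unfolding e1 e2 by simp
    qed
    finally show ?thesis by simp
  qed
  have "(LINT s:{p..z}|lborel. cmod (F s)) \<le> (LINT s:{p..z}|lborel. Bd s)"
    by (rule set_integral_mono[OF Fi Bi pt])
  then show ?thesis using cong intB unfolding F_def V_def w_def p_def by linarith
qed



theorem lemma3p5:
  fixes f g :: "real \<Rightarrow> complex" and d1 d2 :: int and \<zeta> :: real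
  assumes "W11_S1 f g" and "S1_degree f = of_int d1"
    and "lebesgue_point g \<zeta>" and "wedge (f \<zeta>) (g \<zeta>) \<noteq> 0"
    and "real_of_int (d2 - d1) * wedge (f \<zeta>) (g \<zeta>) < 0"
  shows "\<exists>h G. W11_S1 h G \<and> S1_degree h = of_int d2 \<and>
           (LINT s:{0..2*pi}|lborel. cmod (g s - G s)) < 2*pi*\<bar>real_of_int (d1 - d2)\<bar>"
proof -
  note W = assms(1)
  define \<omega> where "\<omega> = wedge (f \<zeta>) (g \<zeta>)"
  define k where "k = d1 - d2"
  have wne: "\<omega> \<noteq> 0" using assms(4) by (simp add: \<omega>_def)
  have kw: "0 < of_int k * \<omega>"
  proof -
    have "real_of_int (d2 - d1) = - of_int k" by (simp add: k_def)
    then show ?thesis using assms(5) unfolding \<omega>_def by simp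
  qed
  have k0: "k \<noteq> 0" using kw by auto
  define m :: int where "m = \<lceil>\<zeta>/(2*pi)\<rceil> - 1"
  define T where "T = 2*pi * of_int m"
  define z where "z = \<zeta> - T"
  have mz: "of_int m < \<zeta>/(2*pi)" "\<zeta>/(2*pi) \<le> of_int m + 1"
    unfolding m_def by (simp_all add: ceiling_le_iff less_ceiling_iff) linarith+
  have z: "0 < z" "z \<le> 2*pi"
  proof -
    have "2*pi * of_int m < \<zeta>" using mz(1) pi_gt_zero by (simp add: less_divide_eq mult.commute)
    moreover have "\<zeta> \<le> 2*pi * (of_int m + 1)" using mz(2) pi_gt_zero by (simp add: divide_le_eq mult.commute)
    ultimately show "0 < z" "z \<le> 2*pi" unfolding z_def T_def by (simp_all add: algebra_simps)
  qed
  define gt where "gt s = g (s + T)" for s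
  have Wt: "W11_S1 f gt" unfolding gt_def[abs_def] by (rule W11_shift[OF W T_def])
  have Lt: "lebesgue_point gt z" unfolding gt_def[abs_def] z_def by (rule lebesgue_point_shift[OF assms(3)])
  have fz: "f z = f \<zeta>" using W11_per[OF W, of z m] unfolding z_def T_def by simp
  have gz: "gt z = g \<zeta>" unfolding gt_def z_def by simp
  have omt: "\<omega> = wedge (f z) (gt z)" unfolding fz gz \<omega>_def ..
  define K where "K = \<omega>^2/(2*pi*\<bar>k\<bar>) + 2*\<omega>^2 + 2*pi*\<bar>k\<bar>*\<omega>^2"
  have Kp: "0 < K" unfolding K_def using wne k0 by (intro add_pos_pos) auto
  define \<delta> where "\<delta> = \<bar>\<omega>\<bar> / (4 * (2 + 2*pi*\<bar>k\<bar>))"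
  have dp: "0 < \<delta>" unfolding \<delta>_def using wne by (intro divide_pos_pos) (auto intro: add_pos_nonneg)
  have ev: "eventually (\<lambda>r. (LINT s:{z-r..z+r}|lborel. cmod (gt s - gt z)) < 2*r*\<delta>
      \<and> 0 < r \<and> r < \<bar>\<omega>\<bar>/(2*K) \<and> r < z \<and> r < 2*pi) (at_right 0)"
  proof -
    have "eventually (\<lambda>r::real. r < \<bar>\<omega>\<bar>/(2*K)) (at_right 0)"
      unfolding eventually_at_right_field using wne Kp by (intro exI[of _ "\<bar>\<omega>\<bar>/(2*K)"]) auto
    moreover have "eventually (\<lambda>r::real. r < z) (at_right 0)"
      unfolding eventually_at_right_field using z by (intro exI[of _ z]) auto
    moreover have "eventually (\<lambda>r::real. r < 2*pi) (at_right 0)"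
      unfolding eventually_at_right_field by (intro exI[of _ "2*pi"]) auto
    moreover have "eventually (\<lambda>r::real. 0 < r) (at_right 0)" by (rule eventually_at_right_less)
    moreover note LP_event[OF Lt dp]
    ultimately show ?thesis by eventually_elim auto
  qed
  then obtain \<epsilon> where e: "(LINT s:{z-\<epsilon>..z+\<epsilon>}|lborel. cmod (gt s - gt z)) < 2*\<epsilon>*\<delta>"
      "0 < \<epsilon>" "\<epsilon> < \<bar>\<omega>\<bar>/(2*K)" "\<epsilon> < z" "\<epsilon> < 2*pi"
    using eventually_happens'[OF trivial_limit_at_right_real] by blast
  define Eb where "Eb = 2*\<epsilon>*\<delta>"
  have Ebb: "(LINT s:{z-\<epsilon>..z}|lborel. cmod (gt s - gt z)) \<le> Eb"
    using LP_sub[OF Wt, of z \<epsilon> "z-\<epsilon>" z] e(1) e(2) unfolding Eb_def by simp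
  have eps: "0 < \<epsilon>" "\<epsilon> < 2*pi" using e by auto
  have pz: "0 < z - \<epsilon>" "z \<le> 2*pi" using e z by auto
  define p where "p = z - \<epsilon>"
  define V where "V = Vf p \<epsilon> k"
  define w where "w = wfn p \<epsilon> k"
  have est: "(LINT s:{0..2*pi}|lborel. cmod (gt s * (V s - 1) + f s * w s))
     \<le> 2*pi*\<bar>k\<bar> - \<bar>\<omega>\<bar>*\<epsilon> + \<omega>^2*\<epsilon>^2/(2*pi*\<bar>k\<bar>) + 2*Eb + 2*\<omega>^2*\<epsilon>^2 + 2*pi*\<bar>k\<bar>*Eb + 2*pi*\<bar>k\<bar>*\<omega>^2*\<epsilon>^2"
    unfolding V_def w_def p_def by (rule estimate[OF Wt Lt omt kw eps pz Ebb])
  have "\<bar>\<omega>\<bar>*\<epsilon> - (\<omega>^2*\<epsilon>^2/(2*pi*\<bar>k\<bar>) + 2*Eb + 2*\<omega>^2*\<epsilon>^2 + 2*pi*\<bar>k\<bar>*Eb + 2*pi*\<bar>k\<bar>*\<omega>^2*\<epsilon>^2) > 0"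
  proof -
    have "\<omega>^2*\<epsilon>^2/(2*pi*\<bar>k\<bar>) + 2*\<omega>^2*\<epsilon>^2 + 2*pi*\<bar>k\<bar>*\<omega>^2*\<epsilon>^2 = \<epsilon> * (\<epsilon> * K)"
      unfolding K_def by (simp add: algebra_simps power2_eq_square)
    moreover have "\<epsilon> * K < \<bar>\<omega>\<bar>/2"
    proof -
      have "\<epsilon> * (2*K) < \<bar>\<omega>\<bar>" using e(3) Kp by (simp add: less_divide_eq)
      then show ?thesis by linarith
    qed
    moreover have "2*Eb + 2*pi*\<bar>k\<bar>*Eb = \<epsilon> * (\<bar>\<omega>\<bar>/2)"
    proof -
      have "2*Eb + 2*pi*\<bar>k\<bar>*Eb = (2 + 2*pi*\<bar>k\<bar>) * (2*\<epsilon>*\<delta>)" unfolding Eb_def by (simp add: algebra_simps)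
      also have "\<dots> = \<epsilon> * (\<bar>\<omega>\<bar>/2)"
      proof -
        define D where "D = 2 + 2*pi*\<bar>k\<bar>"
        have D0: "D \<noteq> 0" unfolding D_def using pi_gt_zero
          by (metis abs_ge_zero add_pos_nonneg less_irrefl mult_nonneg_nonneg of_int_abs of_int_0_le_iff pi_ge_zero zero_less_numeral zero_le_numeral)
        have "\<delta> = \<bar>\<omega>\<bar> / (4 * D)" unfolding \<delta>_def D_def ..
        then show ?thesis unfolding D_def[symmetric] using D0 by (simp add: field_simps)
      qed
      finally show ?thesis .
    qed
    moreover have "\<epsilon> * (\<epsilon> * K) < \<epsilon> * (\<bar>\<omega>\<bar>/2)" using calculation(2) e(2) by simp
    ultimately show ?thesis by (simp add: algebra_simps)
  qed
  with est have cost: "(LINT s:{0..2*pi}|lborel. cmod (gt s * (V s - 1) + f s * w s)) < 2*pi*\<bar>k\<bar>" by linarith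
  define h where "h x = f x * V x" for x
  define G where "G s = g s + gt s * (V s - 1) + f s * w s" for s
  have fc: "continuous_on UNIV f" by (rule W11_cont[OF W])
  have fn1: "cmod (f x) = 1" for x using W unfolding W11_S1_def by blast
  have Vc: "continuous_on UNIV V" unfolding V_def by (rule V_cont[OF eps])
  have Vm[measurable]: "V \<in> borel_measurable borel" unfolding V_def by (rule V_meas[OF eps])
  have wm[measurable]: "w \<in> borel_measurable borel" unfolding w_def by (rule w_meas[OF eps])
  have fm[measurable]: "f \<in> borel_measurable borel" using fc by (rule borel_measurable_continuous_onI)
  have Gint: "set_integrable lborel {a..b} (\<lambda>s. gt s * (V s - 1) + f s * w s)" for a b
  proof -
    have i1: "set_integrable lborel {a..b} (\<lambda>s. gt s * (V s - 1))"
    proof (rule set_int_mult_bounded[OF W11_int[OF Wt], where M=2])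
      show "(\<lambda>s. V s - 1) \<in> borel_measurable borel" by measurable
      fix x show "cmod (V x - 1) \<le> 2" using norm_triangle_ineq4[of "V x" 1] V_norm[OF eps, of p k x]
        unfolding V_def by simp
    qed
    have i2: "set_integrable lborel {a..b} (\<lambda>s. f s * w s)"
    proof (rule set_int_bounded[where M="2*pi*\<bar>k\<bar>/\<epsilon>"])
      show "(\<lambda>s. f s * w s) \<in> borel_measurable borel" by measurable
      fix x show "cmod (f x * w x) \<le> 2*pi*\<bar>k\<bar>/\<epsilon>" unfolding norm_mult fn1 w_def using w_bound[OF eps] by simp
    qed
    show ?thesis using i1 i2 by (rule set_integral_add(1))
  qed
  have WhG: "W11_S1 h G"
    unfolding W11_S1_def
  proof (intro conjI allI impI)
    fix x
    show "h (x + 2*pi) = h x" unfolding h_def V_def using W V_per[OF eps] unfolding W11_S1_def by simp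
    show "cmod (h x) = 1" unfolding h_def V_def using fn1 V_norm[OF eps] by (simp add: norm_mult)
  next
    fix a b :: real
    show "set_integrable lborel {a..b} G"
      unfolding G_def[abs_def] add.assoc by (rule set_integral_add(1)[OF W11_int[OF W] Gint])
  next
    fix a b :: real assume ab: "a \<le> b"
    have PR: "set_integrable lborel {a..b} (\<lambda>s. gt s * V s + f s * w s)"
       "f b * V b - f a * V a = (LINT s:{a..b}|lborel. gt s * V s + f s * w s)"
    proof -
      have fF: "\<And>x. a \<le> x \<Longrightarrow> x \<le> b \<Longrightarrow> f x - f a = (LINT s:{a..x}|lborel. gt s)"
        using Wt unfolding W11_S1_def by blast
      have uF: "\<And>x. a \<le> x \<Longrightarrow> x \<le> b \<Longrightarrow> V x - V a = (LINT s:{a..x}|lborel. w s)"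
        unfolding V_def w_def by (rule V_FTC[OF eps])
      show "set_integrable lborel {a..b} (\<lambda>s. gt s * V s + f s * w s)"
        "f b * V b - f a * V a = (LINT s:{a..b}|lborel. gt s * V s + f s * w s)"
        using prod_rule[OF ab W11_int[OF Wt] w_int[OF eps, where p=p and k=k and a=a and b=b, folded w_def] fF uF fc Vc] by auto
    qed
    have Gd: "G = (\<lambda>s. (g s - gt s) + (gt s * V s + f s * w s))"
      by (auto simp: G_def algebra_simps)
    have dI: "set_integrable lborel {a..b} (\<lambda>s. g s - gt s)"
      by (rule set_integral_diff(1)[OF W11_int[OF W] W11_int[OF Wt]])
    have "(LINT s:{a..b}|lborel. G s) = (LINT s:{a..b}|lborel. g s - gt s) + (LINT s:{a..b}|lborel. gt s * V s + f s * w s)"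
      unfolding Gd by (rule set_integral_add(2)[OF dI PR(1)])
    also have "(LINT s:{a..b}|lborel. g s - gt s) = (LINT s:{a..b}|lborel. g s) - (LINT s:{a..b}|lborel. gt s)"
      by (rule set_integral_diff(2)[OF W11_int[OF W] W11_int[OF Wt]])
    also have "(LINT s:{a..b}|lborel. g s) = f b - f a" using W ab unfolding W11_S1_def by simp
    also have "(LINT s:{a..b}|lborel. gt s) = f b - f a" using Wt ab unfolding W11_S1_def by simp
    finally show "h b - h a = (LINT s:{a..b}|lborel. G s)" using PR(2) unfolding h_def by simp
  qed
  have deg: "S1_degree h = of_int d2"
  proof -
    have fnz: "f x \<noteq> 0" for x using fn1[of x] by auto
    have "S1_degree (\<lambda>x. f x * exp (- (2 * of_real pi * \<i> * of_int k) * of_real (rho (\<epsilon>/(2*pi)) ((x - p)/(2*pi)))))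
        = of_int (d1 - k)"
      by (rule degree_mult[OF fc fnz assms(2) Lam_cont[OF eps] Lam_per[OF eps]])
    moreover have "h = (\<lambda>x. f x * exp (- (2 * of_real pi * \<i> * of_int k) * of_real (rho (\<epsilon>/(2*pi)) ((x - p)/(2*pi)))))"
      unfolding h_def V_def Vf_def ..
    ultimately show ?thesis by (simp add: k_def)
  qed
  have eqG: "(LINT s:{0..2*pi}|lborel. cmod (g s - G s)) = (LINT s:{0..2*pi}|lborel. cmod (gt s * (V s - 1) + f s * w s))"
  proof -
    have "cmod (g s - G s) = cmod (gt s * (V s - 1) + f s * w s)" for s
    proof -
      have "g s - G s = - (gt s * (V s - 1) + f s * w s)" unfolding G_def by simp
      then show ?thesis by (simp only: norm_minus_cancel)
    qed
    then show ?thesis by simp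
  qed
  have kk: "2*pi*\<bar>k\<bar> = 2*pi*\<bar>real_of_int (d1 - d2)\<bar>" by (simp add: k_def)
  have "(LINT s:{0..2*pi}|lborel. cmod (g s - G s)) < 2*pi*\<bar>real_of_int (d1 - d2)\<bar>"
    using cost unfolding eqG kk .
  then show ?thesis using WhG deg by blast
qed

end
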